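(* Let $\mathcal{K}$ be a flat Kripke structure, $\Phi=\varphi\,\mathtt{U}^{\frac{x}{y}}\psi$ an $\mathtt{fLTL}$ formula (with $x\le y$, $y>0$), and $\mathcal{P}=(P_0,\dots,P_m)$ an augmented path schema in $\mathcal{K}$ that is consistent with respect to $\varphi$ and with respect to $\psi$. Let $P=P_k$ with $k<m$ be a loop of $\mathcal{P}$ (a non-terminal loop), let $v=\ell_0\ell_1\dots\ell_{|P|-1}$ be its sequence of locations, and let $\hat n=|P|\cdot y$. Then for every run $\sigma\in\mathtt{Runs}(\mathcal{P})$ of the form $\sigma=uv^nw$ (with $u$ a finite and $w$ an infinite sequence of locations) where $n\ge\hat n+2$, there are $n_1,n_2\in\mathbb{N}$ with $n=n_1+\hat n+n_2$ (so $\sigma=uv^{n_1}v^{\hat n}v^{n_2}w$) such that for all positions $i$ on $\sigma$ with $|u|\le i<|u|+(n_1-1)|P|$ or $|u|+(n_1+\hat n)|P|\le i<|u|+(n_1+\hat n+n_2-2)|P|$ we have $(\sigma,i)\models_\mathcal{P}\Phi$ if and only if $(\sigma,i+|P|)\models_\mathcal{P}\Phi$.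
   Context: Kripke structure: $\mathcal{K}=(S,s_I,E,\lambda)$ with finite $S$, $s_I\in S$, $E\subseteq S\times S$, $\lambda:S\to2^{AP}$ for a finite set $AP$. A simple loop is a finite path $s_0\dots s_k$ of pairwise distinct states with $(s_k,s_0)\in E$; $\mathcal{K}$ is flat if every state is the first state of at most one simple loop. $\mathtt{fLTL}$: $\varphi ::= p\mid\varphi\land\varphi\mid\neg\varphi\mid\mathtt{X}\varphi\mid\varphi\,\mathtt{U}^{\frac{x}{y}}\varphi$ with $p\in AP$, $x\le y$ naturals, $y>0$; $\mathtt{sub}(\Phi)$ denotes subformulae (assume $AP\subseteq\mathtt{sub}(\Phi)$). Over an infinite state sequence $\rho$ and position $i$: $(\rho,i)\models p$ iff $p\in\lambda(\rho(i))$; Booleans as usual; $(\rho,i)\models\mathtt{X}\varphi$ iff $(\rho,i+1)\models\varphi$; $(\rho,i)\models\varphi\,\mathtt{U}^{\frac{x}{y}}\psi$ iff $(\rho,i)\models\psi$ or there is $k\ge i$ with $(\rho,k+1)\models\psi$ and $y\cdot|\{j\in[i,k]\mid(\rho,j)\models\varphi\}|\ge x(k-i+1)$. Counter system: $(Q,q_I,C,\Delta)$, $C$ finite set of counters, $\Delta\subseteq Q\times\mathbb{Z}^C\times2^{\mathrm{G}(C)}\times Q$, $\mathrm{G}(C)=\{(c<0),(c\ge0)\mid c\in C\}$; a run is $q_0q_1\dots$ with $q_0=q_I$ such that there are valuations $\theta_0=\mathbf{0},\theta_1,\dots$ and transitions $(q_i,\mathbf{u}_i,G_i,q_{i+1})\in\Delta$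 with $\theta_{i+1}=\theta_i+\mathbf{u}_i$ satisfying all guards in $G_i$. Augmented state $a=(s,L,G,\mathbf{u},t)\in S\times2^{\mathtt{sub}(\Phi)}\times2^{\mathrm{G}(C)}\times\mathbb{Z}^C\times\{\mathtt{L},\mathtt{R}\}$ with projections $\mathtt{st},\mathtt{lab},\mathtt{g},\mathtt{u},\mathtt{t}$. Augmented path: $a_0\dots a_n$ with $(\mathtt{st}(a_i),\mathtt{st}(a_{i+1}))\in E$; row: all types $\mathtt{R}$; loop: non-empty, $(\mathtt{st}(a_n),\mathtt{st}(a_0))\in E$, states pairwise distinct, all types $\mathtt{L}$. APS in $\mathcal{K}$: $\mathcal{P}=(P_0,\dots,P_m)$ of rows and loops, $P_m$ a loop, $P_0\dots P_m$ an augmented path. Locations are indices $\ell\in[0,|\mathcal{P}|-1]$ into $P_0\dots P_m$; $\mathcal{P}[\ell]$ the augmented state there; $\mathtt{loc}_\mathcal{P}(k)$ the locations of $P_k$; $\mathtt{lab}_\mathcal{P}(\ell)=\mathtt{lab}(\mathcal{P}[\ell])$, etc. $\mathtt{CS}(\mathcal{P})=(\{0,\dots,|\mathcal{P}|-1\},0,C,\Delta)$ with transitions $(\ell,\mathtt{u}_\mathcal{P}(\ell),\mathtt{g}_\mathcal{P}(\ell'),\ell')$ whenever $\ell'=\ell+1<|\mathcal{P}|$, or $\ell'<\ell$ and $\{\ell',\dots,\ell\}=\mathtt{loc}_\mathcal{P}(k)$ for a loop $P_k$; $\mathtt{succ}_\mathcal{P}(\ell)$ are the one-step successors. $\mathtt{Runs}(\mathcal{P})$: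 runs of $\mathtt{CS}(\mathcal{P})$ visiting every location at least once. For $\sigma\in\mathtt{Runs}(\mathcal{P})$, $(\sigma,i)\models_\mathcal{P}\varphi$ iff $(\mathtt{st}_\mathcal{P}(\sigma),i)\models\varphi$, where $\mathtt{st}_\mathcal{P}(\sigma)$ is the state sequence $\mathtt{st}(\mathcal{P}[\sigma(0)])\mathtt{st}(\mathcal{P}[\sigma(1)])\dots$. For $\Psi=\alpha\,\mathtt{U}^{\frac{x}{y}}\beta$, an augmented path $u$ is good/neutral/bad for $\Psi$ if $|\{i<|u|\mid\alpha\in\mathtt{lab}(u(i))\}|$ is $>,=,<\frac{x}{y}|u|$. A tuple of augmented paths is $L$-periodic if all have the same length and for every index $i$ the sets $\mathtt{lab}(P(i))\cap L$ coincide over all members $P$. Consistency: for $\ell\in\mathtt{loc}_\mathcal{P}(k)$, $\ell$ is consistent w.r.t. $\Psi$ if all locations are consistent w.r.t. all strict subformulae of $\Psi$ and: (1) $\Psi\in AP$ and ($\Psi\in\mathtt{lab}_\mathcal{P}(\ell)\Leftrightarrow\Psi\in\lambda(\mathtt{st}_\mathcal{P}(\ell))$), or $\Psi=\alpha\land\beta$ and ($\Psi\in\mathtt{lab}_\mathcal{P}(\ell)\Leftrightarrow\alpha,\beta\in\mathtt{lab}_\mathcal{P}(\ell)$), or $\Psi=\neg\alpha$ and ($\Psi\in\mathtt{lab}_\mathcal{P}(\ell)\Leftrightarrow\alpha\notin\mathtt{lab}_\mathcal{P}(\ell)$); (2) $\Psi=\mathtt{X}\alpha$ and for all $\ell'\in\mathtt{succ}_\mathcal{P}(\ell)$: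 $\Psi\in\mathtt{lab}_\mathcal{P}(\ell)\Leftrightarrow\alpha\in\mathtt{lab}_\mathcal{P}(\ell')$; (3) $\Psi=\alpha\,\mathtt{U}^{\frac{x}{y}}\beta$ and one of: (a) $\Psi,\beta\in\mathtt{lab}_\mathcal{P}(\ell)$; (b) $\Psi\in\mathtt{lab}_\mathcal{P}(\ell)$, the last component is good for $\Psi$ and contains a location labelled $\beta$; (c) $\mathtt{t}_\mathcal{P}(\ell)=\mathtt{R}$ and some counter $c$ has update $0$ at all $\ell'<\ell$, $y-x$ at all $\ell'\ge\ell$ labelled $\alpha$, $-x$ at all $\ell'\ge\ell$ not labelled $\alpha$, and: if $\Psi\notin\mathtt{lab}_\mathcal{P}(\ell)$ then $\beta\notin\mathtt{lab}_\mathcal{P}(\ell)$ and every $\ell'>\ell$ labelled $\beta$ has $(c<0)\in\mathtt{g}_\mathcal{P}(\ell')$; if $\Psi\in\mathtt{lab}_\mathcal{P}(\ell)$ then some $\ell'>\ell$ labelled $\beta$ has $(c\ge0)\in\mathtt{g}_\mathcal{P}(\ell')$; (d) some component $P_{k'}$ has all locations consistent w.r.t. $\Psi$ and: if $P_k$ is the last component then $k'<k$ and $(P_{k'},\dots,P_k)$ is $\{\alpha,\beta,\Psi\}$-periodic; if $P_k$ is not last and ($P_k$ good/neutral and $\Psi\notin\mathtt{lab}_\mathcal{P}(\ell)$, or $P_k$ bad and $\Psi\in\mathtt{lab}_\mathcal{P}(\ell)$) then $k'<k$ and $(P_{k'},\dots,P_{k+1})$ is periodic; if $P_k$ is not last and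 ($P_k$ good/neutral and $\Psi\in\mathtt{lab}_\mathcal{P}(\ell)$, or $P_k$ bad and $\Psi\notin\mathtt{lab}_\mathcal{P}(\ell)$) then $k<k'$, $P_{k'}$ not last, and $(P_k,\dots,P_{k'+1})$ is periodic. $\mathcal{P}$ is consistent w.r.t. $\Psi$ if all its locations are. *)

theory Defs
  imports Main
begin

definition kripke :: "'s set \<Rightarrow> 's \<Rightarrow> ('s \<times> 's) set \<Rightarrow> ('s \<Rightarrow> 'ap set) \<Rightarrow> 'ap set \<Rightarrow> bool" where
  "kripke S sI E lam AP \<longleftrightarrow> finite S \<and> sI \<in> S \<and> E \<subseteq> S \<times> S \<and> finite AP \<and> (\<forall>s\<in>S. lam s \<subseteq> AP)"

definition simple_loop :: "'s set \<Rightarrow> ('s \<times> 's) set \<Rightarrow> 's list \<Rightarrow> bool" where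
  "simple_loop S E xs \<longleftrightarrow> xs \<noteq> [] \<and> distinct xs \<and> set xs \<subseteq> S
     \<and> (\<forall>i. Suc i < length xs \<longrightarrow> (xs ! i, xs ! Suc i) \<in> E)
     \<and> (last xs, hd xs) \<in> E"

definition flat_kripke :: "'s set \<Rightarrow> ('s \<times> 's) set \<Rightarrow> bool" where
  "flat_kripke S E \<longleftrightarrow> (\<forall>s. \<forall>xs ys. simple_loop S E xs \<and> simple_loop S E ys \<and> hd xs = s \<and> hd ys = s \<longrightarrow> xs = ys)"

datatype 'ap fltl =
    Prop 'ap
  | And "'ap fltl" "'ap fltl"
  | Not "'ap fltl"
  | Next "'ap fltl"
  | Until "'ap fltl" nat nat "'ap fltl"

text \<open>Until a x y b is a U^{x/y} b.\<close>

fun subf :: "'ap fltl \<Rightarrow> 'ap fltl set" where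
  "subf (Prop p) = {Prop p}"
| "subf (And a b) = insert (And a b) (subf a \<union> subf b)"
| "subf (Not a) = insert (Not a) (subf a)"
| "subf (Next a) = insert (Next a) (subf a)"
| "subf (Until a x y b) = insert (Until a x y b) (subf a \<union> subf b)"

definition strict_subf :: "'ap fltl \<Rightarrow> 'ap fltl set" where
  "strict_subf f = subf f - {f}"

definition sub :: "'ap set \<Rightarrow> 'ap fltl \<Rightarrow> 'ap fltl set" where
  "sub AP f = subf f \<union> Prop ` AP"

fun wf_fltl :: "'ap fltl \<Rightarrow> bool" where
  "wf_fltl (Prop p) = True"
| "wf_fltl (And a b) = (wf_fltl a \<and> wf_fltl b)"
| "wf_fltl (Not a) = wf_fltl a"
| "wf_fltl (Next a) = wf_fltl a"
| "wf_fltl (Until a x y b) = (x \<le> y \<and> 0 < y \<and> wf_fltl a \<and> wf_fltl b)"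

fun sat :: "('s \<Rightarrow> 'ap set) \<Rightarrow> (nat \<Rightarrow> 's) \<Rightarrow> nat \<Rightarrow> 'ap fltl \<Rightarrow> bool" where
  "sat lam \<rho> i (Prop p) = (p \<in> lam (\<rho> i))"
| "sat lam \<rho> i (And a b) = (sat lam \<rho> i a \<and> sat lam \<rho> i b)"
| "sat lam \<rho> i (Not a) = (\<not> sat lam \<rho> i a)"
| "sat lam \<rho> i (Next a) = sat lam \<rho> (Suc i) a"
| "sat lam \<rho> i (Until a x y b) =
     (sat lam \<rho> i b \<or>
      (\<exists>k\<ge>i. sat lam \<rho> (Suc k) b \<and>
              y * card {j \<in> {i..k}. sat lam \<rho> j a} \<ge> x * (k - i + 1)))"

datatype 'c guard = Neg 'c | NonNeg 'c

fun guard_holds :: "('c \<Rightarrow> int) \<Rightarrow> 'c guard \<Rightarrow> bool" where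
  "guard_holds \<theta> (Neg c) = (\<theta> c < 0)"
| "guard_holds \<theta> (NonNeg c) = (\<theta> c \<ge> 0)"

datatype ltype = L | R

datatype ('s, 'ap, 'c) astate =
  AState (st: 's) (lab: "'ap fltl set") (grd: "'c guard set") (upd: "'c \<Rightarrow> int") (atype: ltype)

type_synonym ('s, 'ap, 'c) apath = "('s, 'ap, 'c) astate list"

definition is_row :: "('s, 'ap, 'c) apath \<Rightarrow> bool" where
  "is_row p \<longleftrightarrow> p \<noteq> [] \<and> (\<forall>a\<in>set p. atype a = R)"

definition is_loop :: "('s \<times> 's) set \<Rightarrow> ('s, 'ap, 'c) apath \<Rightarrow> bool" where
  "is_loop E p \<longleftrightarrow> p \<noteq> [] \<and> (st (last p), st (hd p)) \<in> E \<and> distinct (map st p)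
     \<and> (\<forall>a\<in>set p. atype a = L)"

definition is_apath :: "('s \<times> 's) set \<Rightarrow> ('s, 'ap, 'c) apath \<Rightarrow> bool" where
  "is_apath E p \<longleftrightarrow> p \<noteq> [] \<and> (\<forall>i. Suc i < length p \<longrightarrow> (st (p ! i), st (p ! Suc i)) \<in> E)"

text \<open>An augmented path schema (P_0,...,P_m) in K, augmented states over sub(Phi)
  (the counter set C is the finite type 'c).\<close>
definition is_aps :: "'s set \<Rightarrow> ('s \<times> 's) set \<Rightarrow> 'ap set \<Rightarrow> 'ap fltl \<Rightarrow> ('s, 'ap, 'c) apath list \<Rightarrow> bool" where
  "is_aps S E AP \<Phi> Ps \<longleftrightarrow> Ps \<noteq> []
     \<and> (\<forall>P\<in>set Ps. is_row P \<or> is_loop E P)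
     \<and> is_loop E (last Ps)
     \<and> is_apath E (concat Ps)
     \<and> (\<forall>a\<in>set (concat Ps). st a \<in> S \<and> lab a \<subseteq> sub AP \<Phi>)"

definition aps_len :: "('s, 'ap, 'c) apath list \<Rightarrow> nat" where
  "aps_len Ps = length (concat Ps)"

definition aps_at :: "('s, 'ap, 'c) apath list \<Rightarrow> nat \<Rightarrow> ('s, 'ap, 'c) astate" where
  "aps_at Ps l = concat Ps ! l"

definition comp_start :: "('s, 'ap, 'c) apath list \<Rightarrow> nat \<Rightarrow> nat" where
  "comp_start Ps k = length (concat (take k Ps))"

definition loc :: "('s, 'ap, 'c) apath list \<Rightarrow> nat \<Rightarrow> nat set" where
  "loc Ps k = {comp_start Ps k ..< comp_start Ps k + length (Ps ! k)}"

text \<open>Transitions of CS(P) (the update of the transition is upd at the source,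
  the guards are those of the target).\<close>
definition cs_trans :: "('s \<times> 's) set \<Rightarrow> ('s, 'ap, 'c) apath list \<Rightarrow> nat \<Rightarrow> nat \<Rightarrow> bool" where
  "cs_trans E Ps l l' \<longleftrightarrow>
     (l' = Suc l \<and> l' < aps_len Ps) \<or>
     (l' < l \<and> (\<exists>k<length Ps. is_loop E (Ps ! k) \<and> {l'..l} = loc Ps k))"

definition succ :: "('s \<times> 's) set \<Rightarrow> ('s, 'ap, 'c) apath list \<Rightarrow> nat \<Rightarrow> nat set" where
  "succ E Ps l = {l'. cs_trans E Ps l l'}"

definition cs_run :: "('s \<times> 's) set \<Rightarrow> ('s, 'ap, 'c) apath list \<Rightarrow> (nat \<Rightarrow> nat) \<Rightarrow> bool" where
  "cs_run E Ps \<sigma> \<longleftrightarrow> \<sigma> 0 = 0 \<and>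
     (\<exists>\<theta> :: nat \<Rightarrow> 'c \<Rightarrow> int. \<theta> 0 = (\<lambda>c. 0) \<and>
        (\<forall>i. cs_trans E Ps (\<sigma> i) (\<sigma> (Suc i))
             \<and> \<theta> (Suc i) = (\<lambda>c. \<theta> i c + upd (aps_at Ps (\<sigma> i)) c)
             \<and> (\<forall>g\<in>grd (aps_at Ps (\<sigma> (Suc i))). guard_holds (\<theta> (Suc i)) g)))"

definition Runs :: "('s \<times> 's) set \<Rightarrow> ('s, 'ap, 'c) apath list \<Rightarrow> (nat \<Rightarrow> nat) set" where
  "Runs E Ps = {\<sigma>. cs_run E Ps \<sigma> \<and> (\<forall>l<aps_len Ps. \<exists>i. \<sigma> i = l)}"

definition sat_P :: "('s \<Rightarrow> 'ap set) \<Rightarrow> ('s, 'ap, 'c) apath list \<Rightarrow> (nat \<Rightarrow> nat) \<Rightarrow> nat \<Rightarrow> 'ap fltl \<Rightarrow> bool" where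
  "sat_P lam Ps \<sigma> i f = sat lam (\<lambda>j. st (aps_at Ps (\<sigma> j))) i f"

definition count_lab :: "'ap fltl \<Rightarrow> ('s, 'ap, 'c) apath \<Rightarrow> nat" where
  "count_lab a u = card {i. i < length u \<and> a \<in> lab (u ! i)}"

definition good :: "nat \<Rightarrow> nat \<Rightarrow> 'ap fltl \<Rightarrow> ('s, 'ap, 'c) apath \<Rightarrow> bool" where
  "good x y a u \<longleftrightarrow> y * count_lab a u > x * length u"
definition neutral :: "nat \<Rightarrow> nat \<Rightarrow> 'ap fltl \<Rightarrow> ('s, 'ap, 'c) apath \<Rightarrow> bool" where
  "neutral x y a u \<longleftrightarrow> y * count_lab a u = x * length u"
definition bad :: "nat \<Rightarrow> nat \<Rightarrow> 'ap fltl \<Rightarrow> ('s, 'ap, 'c) apath \<Rightarrow> bool" where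
  "bad x y a u \<longleftrightarrow> y * count_lab a u < x * length u"

definition periodic :: "'ap fltl set \<Rightarrow> ('s, 'ap, 'c) apath list \<Rightarrow> bool" where
  "periodic Lset Qs \<longleftrightarrow>
     (\<forall>P\<in>set Qs. \<forall>Q\<in>set Qs. length P = length Q \<and>
        (\<forall>i<length P. lab (P ! i) \<inter> Lset = lab (Q ! i) \<inter> Lset))"

definition comps :: "('s, 'ap, 'c) apath list \<Rightarrow> nat \<Rightarrow> nat \<Rightarrow> ('s, 'ap, 'c) apath list" where
  "comps Ps a b = take (Suc b - a) (drop a Ps)"

text \<open>Consistency of a location w.r.t. a formula, read as the least fixed point
  (inductive definition) of the clauses (1), (2), (3)(a)-(d).\<close>
inductive consistent_loc ::
  "('s \<Rightarrow> 'ap set) \<Rightarrow> ('s \<times> 's) set \<Rightarrow> ('s, 'ap, 'c) apath list \<Rightarrow> 'ap fltl \<Rightarrow> nat \<Rightarrow> bool"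
  for lam E Ps where
  cons_prop:
    "\<lbrakk> k < length Ps; l \<in> loc Ps k;
       (Prop p \<in> lab (aps_at Ps l) \<longleftrightarrow> p \<in> lam (st (aps_at Ps l))) \<rbrakk>
     \<Longrightarrow> consistent_loc lam E Ps (Prop p) l"
| cons_and:
    "\<lbrakk> k < length Ps; l \<in> loc Ps k;
       \<forall>f\<in>strict_subf (And a b). \<forall>l'<aps_len Ps. consistent_loc lam E Ps f l';
       (And a b \<in> lab (aps_at Ps l) \<longleftrightarrow> a \<in> lab (aps_at Ps l) \<and> b \<in> lab (aps_at Ps l)) \<rbrakk>
     \<Longrightarrow> consistent_loc lam E Ps (And a b) l"
| cons_not:
    "\<lbrakk> k < length Ps; l \<in> loc Ps k;
       \<forall>f\<in>strict_subf (Not a). \<forall>l'<aps_len Ps. consistent_loc lam E Ps f l';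
       (Not a \<in> lab (aps_at Ps l) \<longleftrightarrow> a \<notin> lab (aps_at Ps l)) \<rbrakk>
     \<Longrightarrow> consistent_loc lam E Ps (Not a) l"
| cons_next:
    "\<lbrakk> k < length Ps; l \<in> loc Ps k;
       \<forall>f\<in>strict_subf (Next a). \<forall>l'<aps_len Ps. consistent_loc lam E Ps f l';
       \<forall>l'\<in>succ E Ps l. (Next a \<in> lab (aps_at Ps l) \<longleftrightarrow> a \<in> lab (aps_at Ps l')) \<rbrakk>
     \<Longrightarrow> consistent_loc lam E Ps (Next a) l"
| cons_until_a:
    "\<lbrakk> k < length Ps; l \<in> loc Ps k;
       \<forall>f\<in>strict_subf (Until a x y b). \<forall>l'<aps_len Ps. consistent_loc lam E Ps f l';
       Until a x y b \<in> lab (aps_at Ps l); b \<in> lab (aps_at Ps l) \<rbrakk>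
     \<Longrightarrow> consistent_loc lam E Ps (Until a x y b) l"
| cons_until_b:
    "\<lbrakk> k < length Ps; l \<in> loc Ps k;
       \<forall>f\<in>strict_subf (Until a x y b). \<forall>l'<aps_len Ps. consistent_loc lam E Ps f l';
       Until a x y b \<in> lab (aps_at Ps l);
       good x y a (last Ps);
       \<exists>q\<in>set (last Ps). b \<in> lab q \<rbrakk>
     \<Longrightarrow> consistent_loc lam E Ps (Until a x y b) l"
| cons_until_c:
    "\<lbrakk> k < length Ps; l \<in> loc Ps k;
       \<forall>f\<in>strict_subf (Until a x y b). \<forall>l'<aps_len Ps. consistent_loc lam E Ps f l';
       atype (aps_at Ps l) = R;
       (\<forall>l'<l. upd (aps_at Ps l') c = 0);
       (\<forall>l'. l \<le> l' \<and> l' < aps_len Ps \<and> a \<in> lab (aps_at Ps l') \<longrightarrow>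
              upd (aps_at Ps l') c = int y - int x);
       (\<forall>l'. l \<le> l' \<and> l' < aps_len Ps \<and> a \<notin> lab (aps_at Ps l') \<longrightarrow>
              upd (aps_at Ps l') c = - int x);
       (Until a x y b \<notin> lab (aps_at Ps l) \<longrightarrow>
          b \<notin> lab (aps_at Ps l) \<and>
          (\<forall>l'. l < l' \<and> l' < aps_len Ps \<and> b \<in> lab (aps_at Ps l') \<longrightarrow> Neg c \<in> grd (aps_at Ps l')));
       (Until a x y b \<in> lab (aps_at Ps l) \<longrightarrow>
          (\<exists>l'. l < l' \<and> l' < aps_len Ps \<and> b \<in> lab (aps_at Ps l') \<and> NonNeg c \<in> grd (aps_at Ps l'))) \<rbrakk>
     \<Longrightarrow> consistent_loc lam E Ps (Until a x y b) l"
| cons_until_d: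
    "\<lbrakk> k < length Ps; l \<in> loc Ps k;
       \<forall>f\<in>strict_subf (Until a x y b). \<forall>l'<aps_len Ps. consistent_loc lam E Ps f l';
       k' < length Ps;
       \<forall>l'\<in>loc Ps k'. consistent_loc lam E Ps (Until a x y b) l';
       (Suc k = length Ps \<longrightarrow>
          k' < k \<and> periodic {a, b, Until a x y b} (comps Ps k' k));
       (Suc k < length Ps \<and>
        (((good x y a (Ps ! k) \<or> neutral x y a (Ps ! k)) \<and> Until a x y b \<notin> lab (aps_at Ps l)) \<or>
         (bad x y a (Ps ! k) \<and> Until a x y b \<in> lab (aps_at Ps l))) \<longrightarrow>
          k' < k \<and> periodic {a, b, Until a x y b} (comps Ps k' (Suc k)));
       (Suc k < length Ps \<and>
        (((good x y a (Ps ! k) \<or> neutral x y a (Ps ! k)) \<and> Until a x y b \<in> lab (aps_at Ps l)) \<or>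
         (bad x y a (Ps ! k) \<and> Until a x y b \<notin> lab (aps_at Ps l))) \<longrightarrow>
          k < k' \<and> Suc k' < length Ps \<and> periodic {a, b, Until a x y b} (comps Ps k (Suc k'))) \<rbrakk>
     \<Longrightarrow> consistent_loc lam E Ps (Until a x y b) l"

definition consistent :: "('s \<Rightarrow> 'ap set) \<Rightarrow> ('s \<times> 's) set \<Rightarrow> ('s, 'ap, 'c) apath list \<Rightarrow> 'ap fltl \<Rightarrow> bool" where
  "consistent lam E Ps f \<longleftrightarrow> (\<forall>l<aps_len Ps. consistent_loc lam E Ps f l)"

end

theory Submission
  imports Defs
begin

definition Gs :: "(nat \<Rightarrow> bool) \<Rightarrow> nat \<Rightarrow> nat \<Rightarrow> nat \<Rightarrow> int" where
  "Gs A x y p = (\<Sum>t<p. if A t then int y - int x else - int x)"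

definition Us :: "(nat \<Rightarrow> bool) \<Rightarrow> (nat \<Rightarrow> bool) \<Rightarrow> nat \<Rightarrow> nat \<Rightarrow> nat \<Rightarrow> bool" where
  "Us A B x y i = (\<exists>p\<ge>i. B p \<and> Gs A x y i \<le> Gs A x y p)"

lemma Gs_Suc: "Gs A x y (Suc p) = Gs A x y p + (if A p then int y - int x else - int x)"
  by (simp add: Gs_def)

lemma Gs_diff: "i \<le> p \<Longrightarrow> Gs A x y p - Gs A x y i = int y * int (card {j\<in>{i..<p}. A j}) - int x * int (p - i)"
proof (induction p rule: dec_induct)
  case base then show ?case by simp
next
  case (step p)
  have e: "{j\<in>{i..<Suc p}. A j} = (if A p then insert p {j\<in>{i..<p}. A j} else {j\<in>{i..<p}. A j})"
    using step(1) by (auto simp: less_Suc_eq)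
  have c: "card {j\<in>{i..<Suc p}. A j} = (if A p then Suc (card {j\<in>{i..<p}. A j}) else card {j\<in>{i..<p}. A j})"
    unfolding e by auto
  have "Suc p - i = Suc (p - i)" using step(1) by simp
  moreover have "Gs A x y (Suc p) - Gs A x y i = Gs A x y p - Gs A x y i + (if A p then int y - int x else - int x)"
    by (simp add: Gs_Suc)
  ultimately show ?case unfolding step(3) c by (cases "A p") (simp_all add: algebra_simps)
qed

lemma sat_Until_Us:
  "sat lam \<rho> i (Until a x y b) = Us (\<lambda>t. sat lam \<rho> t a) (\<lambda>t. sat lam \<rho> t b) x y i"
proof
  assume "sat lam \<rho> i (Until a x y b)"
  then consider "sat lam \<rho> i b" | k where "k\<ge>i" "sat lam \<rho> (Suc k) b"
      "y * card {j \<in> {i..k}. sat lam \<rho> j a} \<ge> x * (k - i + 1)" by auto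
  then show "Us (\<lambda>t. sat lam \<rho> t a) (\<lambda>t. sat lam \<rho> t b) x y i"
  proof cases
    case 1 then show ?thesis unfolding Us_def by auto
  next
    case 2
    have se: "{j \<in> {i..k}. sat lam \<rho> j a} = {j \<in> {i..<Suc k}. sat lam \<rho> j a}" by auto
    have sk: "Suc k - i = k - i + 1" using 2 by simp
    have "int x * int (k - i + 1) \<le> int y * int (card {j \<in> {i..k}. sat lam \<rho> j a})"
      using 2(3) by (metis of_nat_le_iff of_nat_mult)
    then have "Gs (\<lambda>t. sat lam \<rho> t a) x y i \<le> Gs (\<lambda>t. sat lam \<rho> t a) x y (Suc k)"
      using Gs_diff[of i "Suc k" "\<lambda>t. sat lam \<rho> t a" x y] 2(1) unfolding se sk by simp
    with 2 show ?thesis unfolding Us_def by (intro exI[of _ "Suc k"]) auto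
  qed
next
  assume "Us (\<lambda>t. sat lam \<rho> t a) (\<lambda>t. sat lam \<rho> t b) x y i"
  then obtain p where p: "p \<ge> i" "sat lam \<rho> p b"
    "Gs (\<lambda>t. sat lam \<rho> t a) x y i \<le> Gs (\<lambda>t. sat lam \<rho> t a) x y p" unfolding Us_def by auto
  show "sat lam \<rho> i (Until a x y b)"
  proof (cases "p = i")
    case True then show ?thesis using p by simp
  next
    case False
    then obtain k where k: "p = Suc k" "k \<ge> i" using p(1) by (cases p) auto
    have se: "{j \<in> {i..k}. sat lam \<rho> j a} = {j \<in> {i..<Suc k}. sat lam \<rho> j a}" by auto
    have sk: "Suc k - i = k - i + 1" using k by simp
    have "int x * int (k - i + 1) \<le> int y * int (card {j \<in> {i..k}. sat lam \<rho> j a})"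
      using Gs_diff[of i "Suc k" "\<lambda>t. sat lam \<rho> t a" x y] p(3) k unfolding se sk by simp
    then have "x * (k - i + 1) \<le> y * card {j \<in> {i..k}. sat lam \<rho> j a}"
      by (metis of_nat_le_iff of_nat_mult)
    with p k show ?thesis by auto
  qed
qed

lemma sum_rot1:
  fixes g :: "nat \<Rightarrow> 'a::comm_monoid_add"
  assumes "0 < m"
  shows "(\<Sum>d<m. g (Suc d mod m)) = (\<Sum>d<m. g d)"
proof -
  obtain k where m: "m = Suc k" using assms by (cases m) auto
  have "(\<Sum>d<Suc k. g (Suc d mod Suc k)) = (\<Sum>d<k. g (Suc d mod Suc k)) + g (Suc k mod Suc k)"
    by simp
  also have "(\<Sum>d<k. g (Suc d mod Suc k)) = (\<Sum>d<k. g (Suc d))"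
    by (intro sum.cong) auto
  also have "(\<Sum>d<k. g (Suc d)) + g (Suc k mod Suc k) = (\<Sum>d<Suc k. g d)"
    unfolding sum.lessThan_Suc_shift by (simp add: add.commute)
  finally show ?thesis using m by simp
qed

lemma sum_rot:
  fixes f :: "nat \<Rightarrow> 'a::comm_monoid_add"
  assumes "0 < m"
  shows "(\<Sum>d<m. f ((c + d) mod m)) = (\<Sum>d<m. f d)"
proof (induction c)
  case 0 then show ?case by (intro sum.cong) auto
next
  case (Suc c)
  have "(\<Sum>d<m. f ((Suc c + d) mod m)) = (\<Sum>d<m. (\<lambda>e. f ((c + e) mod m)) (Suc d mod m))"
    by (intro sum.cong) (auto simp: mod_add_right_eq)
  also have "\<dots> = (\<Sum>d<m. f ((c + d) mod m))"
    using sum_rot1[OF assms, of "\<lambda>e. f ((c + e) mod m)"] by simp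
  finally show ?case using Suc by simp
qed

definition Fh :: "(nat \<Rightarrow> bool) \<Rightarrow> nat \<Rightarrow> nat \<Rightarrow> nat \<Rightarrow> int" where
  "Fh h x y j = (if h j then int y - int x else - int x)"

lemma Gs_add: "Gs A x y (t0 + d) - Gs A x y t0 = (\<Sum>e<d. if A (t0 + e) then int y - int x else - int x)"
  by (induction d) (auto simp: Gs_Suc)

lemma Gs_eqseg:
  assumes "\<And>e. e < d \<Longrightarrow> A (t0 + e) = A (t1 + e)"
  shows "Gs A x y (t0 + d) - Gs A x y t0 = Gs A x y (t1 + d) - Gs A x y t1"
  unfolding Gs_add using assms by (intro sum.cong) auto

lemma Gs_period:
  assumes m: "0 < m" and pat: "\<And>d. d < q * m \<Longrightarrow> A (t0 + d) = h ((c + d) mod m)"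
  shows "Gs A x y (t0 + q * m) - Gs A x y t0 = int q * (\<Sum>j<m. Fh h x y j)"
  using pat
proof (induction q)
  case 0 then show ?case by simp
next
  case (Suc q)
  have IH: "Gs A x y (t0 + q * m) - Gs A x y t0 = int q * (\<Sum>j<m. Fh h x y j)"
    using Suc.prems by (intro Suc.IH) auto
  have "Gs A x y (t0 + q * m + m) - Gs A x y (t0 + q * m)
      = (\<Sum>e<m. if A (t0 + q * m + e) then int y - int x else - int x)" by (rule Gs_add)
  also have "\<dots> = (\<Sum>e<m. Fh h x y ((c + e) mod m))"
  proof (intro sum.cong refl)
    fix e assume "e \<in> {..<m}"
    then have "A (t0 + (q * m + e)) = h ((c + (q * m + e)) mod m)" using Suc.prems by auto
    moreover have "(c + (q * m + e)) mod m = (c + e) mod m"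
      by (metis add.left_commute mod_mult_self3 mult.commute)
    ultimately show "(if A (t0 + q * m + e) then int y - int x else - int x) = Fh h x y ((c + e) mod m)"
      unfolding Fh_def by (simp add: add.assoc)
  qed
  also have "\<dots> = (\<Sum>j<m. Fh h x y j)" by (rule sum_rot[OF m])
  finally show ?case using IH by (simp add: algebra_simps)
qed

lemma Us_shift_eq:
  assumes "\<And>d. A (e1 + d) = A (e2 + d) \<and> B (e1 + d) = B (e2 + d)"
  shows "Us A B x y e1 = Us A B x y e2"
proof -
  have G: "Gs A x y (e1 + d) - Gs A x y e1 = Gs A x y (e2 + d) - Gs A x y e2" for d
    by (rule Gs_eqseg) (use assms in auto)
  have "Us A B x y e = (\<exists>d. B (e + d) \<and> 0 \<le> Gs A x y (e + d) - Gs A x y e)" for e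
    unfolding Us_def by (metis diff_ge_0_iff_ge le_add1 le_add_diff_inverse)
  moreover have "(Gs A x y e1 \<le> Gs A x y (e1 + d)) = (Gs A x y e2 \<le> Gs A x y (e2 + d))" for d
    using G[of d] by linarith
  ultimately show ?thesis using assms by simp
qed

context
  fixes A B hA hB :: "nat \<Rightarrow> bool" and e1 q m c x y :: nat
  assumes m: "0 < m"
    and pat: "\<And>d. d < q * m + m \<Longrightarrow> A (e1 + d) = hA ((c + d) mod m) \<and> B (e1 + d) = hB ((c + d) mod m)"
begin

lemma U_G: "Gs A x y (e1 + q * m) - Gs A x y e1 = int q * (\<Sum>j<m. Fh hA x y j)"
  by (rule Gs_period[OF m]) (use pat in auto)

lemma U1:
  assumes D: "0 \<le> (\<Sum>j<m. Fh hA x y j)" and u: "Us A B x y (e1 + q * m)"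
  shows "Us A B x y e1"
proof -
  obtain p where p: "p \<ge> e1 + q * m" "B p" "Gs A x y (e1 + q * m) \<le> Gs A x y p"
    using u unfolding Us_def by auto
  have "0 \<le> int q * (\<Sum>j<m. Fh hA x y j)" using D by simp
  then show ?thesis using U_G p unfolding Us_def by (intro exI[of _ p]) auto
qed

lemma U2:
  assumes D: "(\<Sum>j<m. Fh hA x y j) \<le> 0" and u: "Us A B x y e1"
  shows "Us A B x y (e1 + q * m)"
proof -
  obtain p where p: "p \<ge> e1" "B p" "Gs A x y e1 \<le> Gs A x y p"
    using u unfolding Us_def by auto
  have qD: "int q * (\<Sum>j<m. Fh hA x y j) \<le> 0" using D by (simp add: mult_nonneg_nonpos)
  show ?thesis
  proof (cases "p \<ge> e1 + q * m")
    case True then show ?thesis using U_G p qD unfolding Us_def by (intro exI[of _ p]) auto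
  next
    case False
    define q0 where "q0 = (p - e1) div m"
    define r0 where "r0 = (p - e1) mod m"
    have pe: "p = e1 + q0 * m + r0" unfolding q0_def r0_def using p(1) by simp
    have r0m: "r0 < m" unfolding r0_def using m by simp
    have q0q: "q0 < q"
    proof (rule ccontr)
      assume "\<not> q0 < q"
      then have "q * m \<le> q0 * m" by (intro mult_right_mono) auto
      then show False using False pe by linarith
    qed
    have mods: "(c + (q0 * m + r0)) mod m = (c + r0) mod m" "(c + (q * m + r0)) mod m = (c + r0) mod m"
      by (metis add.left_commute mod_mult_self3 mult.commute)+
    have qm: "q0 * m + m \<le> q * m" using q0q by (metis add.commute mult_Suc less_eq_Suc_le mult_le_mono1)
    have Bp': "B (e1 + q * m + r0)"
    proof -
      have "B (e1 + (q0 * m + r0)) = hB ((c + r0) mod m)" using pat[of "q0 * m + r0"] mods qm r0m by auto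
      moreover have "B (e1 + (q * m + r0)) = hB ((c + r0) mod m)" using pat[of "q * m + r0"] mods r0m by auto
      ultimately show ?thesis using p(2) pe by (simp add: add.assoc)
    qed
    have seg: "Gs A x y (e1 + q0 * m + r0) - Gs A x y (e1 + q0 * m) = Gs A x y (e1 + q * m + r0) - Gs A x y (e1 + q * m)"
    proof (rule Gs_eqseg)
      fix e assume e: "e < r0"
      have md: "(c + (q0 * m + e)) mod m = (c + e) mod m" "(c + (q * m + e)) mod m = (c + e) mod m"
        by (metis add.left_commute mod_mult_self3 mult.commute)+
      have "A (e1 + (q0 * m + e)) = hA ((c + e) mod m)"
        using pat[of "q0 * m + e"] e r0m qm md(1) by simp
      moreover have "A (e1 + (q * m + e)) = hA ((c + e) mod m)"
        using pat[of "q * m + e"] e r0m md(2) by simp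
      ultimately show "A (e1 + q0 * m + e) = A (e1 + q * m + e)" by (simp add: add.assoc)
    qed
    have G0: "Gs A x y (e1 + q0 * m) - Gs A x y e1 = int q0 * (\<Sum>j<m. Fh hA x y j)"
      by (rule Gs_period[OF m]) (use pat qm in auto)
    have "int q0 * (\<Sum>j<m. Fh hA x y j) \<le> 0" using D by (simp add: mult_nonneg_nonpos)
    then have "Gs A x y (e1 + q * m) \<le> Gs A x y (e1 + q * m + r0)"
      using seg G0 p(3)[unfolded pe] by linarith
    then show ?thesis using Bp' unfolding Us_def by (intro exI[of _ "e1 + q * m + r0"]) auto
  qed
qed

end

lemma lt_multL: "r < (Ln::nat) \<Longrightarrow> a < b \<Longrightarrow> a * Ln + r < b * Ln"
proof -
  assume "r < Ln" "a < b"
  then have "Suc a * Ln \<le> b * Ln" by (intro mult_right_mono) auto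
  then show ?thesis using \<open>r < Ln\<close> by simp
qed

context
  fixes A B :: "nat \<Rightarrow> bool" and s Ln n x y :: nat
  assumes Lpos: "0 < Ln"
    and per: "\<And>t. s \<le> t \<Longrightarrow> t + Ln < s + n * Ln \<Longrightarrow> A (t + Ln) = A t \<and> B (t + Ln) = B t"
begin

private abbreviation "G \<equiv> Gs A x y"
private definition "Dl = G (s + Ln) - G s"

lemma perB: "r < Ln \<Longrightarrow> t < n \<Longrightarrow> B (s + t * Ln + r) = B (s + r)"
proof (induction t)
  case 0 then show ?case by simp
next
  case (Suc t)
  have "Suc t * Ln + r < n * Ln" using lt_multL[of r Ln "Suc t" n] Suc.prems by simp
  then have "B (s + t * Ln + r + Ln) = B (s + t * Ln + r)"
    using per[of "s + t * Ln + r"] by (auto simp: algebra_simps)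
  then show ?case using Suc by (simp add: algebra_simps)
qed

lemma Gshift: "s \<le> p \<Longrightarrow> p + Ln \<le> s + n * Ln \<Longrightarrow> G (p + Ln) - G p = Dl"
proof (induction p rule: dec_induct)
  case base then show ?case by (simp add: Dl_def)
next
  case (step p)
  have "A (p + Ln) = A p" using per[of p] step by auto
  then have "G (Suc p + Ln) - G (Suc p) = G (p + Ln) - G p"
    by (simp add: Gs_Suc)
  with step show ?case by simp
qed

lemma perG: "r < Ln \<Longrightarrow> t < n \<Longrightarrow> G (s + t * Ln + r) = G (s + r) + int t * Dl"
proof (induction t)
  case 0 then show ?case by simp
next
  case (Suc t)
  have "t * Ln + r + Ln \<le> n * Ln"
  proof -
    have "Suc t * Ln \<le> (n - 1) * Ln" using Suc.prems by (intro mult_right_mono) auto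
    moreover have "(n - 1) * Ln + Ln = n * Ln" using Suc.prems by (cases n) auto
    ultimately show ?thesis using Suc.prems by simp
  qed
  then have "G (s + t * Ln + r + Ln) - G (s + t * Ln + r) = Dl"
    by (intro Gshift) auto
  then show ?case using Suc by (simp add: algebra_simps)
qed

lemma Gbound: "p \<le> q \<Longrightarrow> x \<le> y \<Longrightarrow> \<bar>G q - G p\<bar> \<le> int (q - p) * int y"
proof (induction q rule: dec_induct)
  case base then show ?case by simp
next
  case (step q)
  have "\<bar>(if A q then int y - int x else - int x)\<bar> \<le> int y" using step by auto
  then have "\<bar>G (Suc q) - G p\<bar> \<le> \<bar>G q - G p\<bar> + int y" by (simp add: Gs_Suc)
  also have "\<dots> \<le> int (q - p) * int y + int y" using step by simp
  also have "\<dots> = int (Suc q - p) * int y" using step(1) by (simp add: Suc_diff_le algebra_simps)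
  finally show ?case .
qed

private definition "E = s + (n - 1) * Ln"
private definition "W g = (\<exists>p\<ge>E. B p \<and> g \<le> G p)"
private definition "Loc i = (\<exists>p. i \<le> p \<and> p < i + Ln \<and> B p \<and> G i \<le> G p)"

lemma W_anti: "g \<le> g' \<Longrightarrow> W g' \<Longrightarrow> W g"
  unfolding W_def by force

lemma decomp:
  assumes r: "r < Ln" and t: "t + 2 \<le> n"
  shows "Us A B x y (s + t * Ln + r) = (Loc (s + t * Ln + r) \<or> W (G (s + t * Ln + r)))"
proof -
  define i where "i = s + t * Ln + r"
  have "t < n - 1" using t by simp
  then have iE: "i \<le> E"
    using lt_multL[of r Ln t "n - 1"] r unfolding i_def E_def by simp
  show ?thesis unfolding i_def[symmetric]
  proof
    assume "Us A B x y i"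
    then obtain p where p: "p \<ge> i" "B p" "G i \<le> G p" unfolding Us_def by auto
    show "Loc i \<or> W (G i)"
    proof (cases "p < i + Ln")
      case True then show ?thesis using p unfolding Loc_def by auto
    next
      case False
      show ?thesis
      proof (cases "p \<ge> E")
        case True then show ?thesis using p unfolding W_def by auto
      next
        case pE: False
        define r' where "r' = (p - s) mod Ln"
        define t' where "t' = (p - s) div Ln"
        have ps: "s \<le> p" using p(1) unfolding i_def by simp
        have pdec: "p = s + t' * Ln + r'" unfolding r'_def t'_def using ps
          by (simp add: mult.commute)
        have r'Ln: "r' < Ln" unfolding r'_def using Lpos by simp
        have t'n: "t' < n - 1"
        proof (rule ccontr)
          assume "\<not> t' < n - 1"
          then have "n - 1 \<le> t'" by simp
          then have "(n - 1) * Ln \<le> t' * Ln" by (rule mult_right_mono) simp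
          then show False using pE pdec unfolding E_def by linarith
        qed
        have tt': "t + 1 \<le> t'"
        proof (rule ccontr)
          assume "\<not> t + 1 \<le> t'"
          then have "t' \<le> t" by simp
          then have "t' * Ln \<le> t * Ln" by (rule mult_right_mono) simp
          then show False using False pdec r r'Ln unfolding i_def by linarith
        qed
        have Bp: "B p = B (s + r')" using perB[OF r'Ln, of t'] t'n pdec by simp
        have Gp: "G p = G (s + r') + int t' * Dl" using perG[OF r'Ln, of t'] t'n pdec by simp
        show ?thesis
        proof (cases "Dl \<ge> 0")
          case True
          define p' where "p' = s + (n - 1) * Ln + r'"
          have "B p' = B (s + r')" unfolding p'_def using perB[OF r'Ln, of "n - 1"] t'n by simp
          moreover have "G p' = G (s + r') + int (n - 1) * Dl"
            unfolding p'_def using perG[OF r'Ln, of "n - 1"] t'n by simp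
          moreover have "int t' * Dl \<le> int (n - 1) * Dl"
            using True t'n by (intro mult_right_mono) auto
          moreover have "p' \<ge> E" unfolding p'_def E_def by simp
          ultimately have "W (G i)" unfolding W_def using p Bp Gp
            by (intro exI[of _ p']) auto
          then show ?thesis by simp
        next
          case False
          define t'' where "t'' = (if r \<le> r' then t else t + 1)"
          define p' where "p' = s + t'' * Ln + r'"
          have t''n: "t'' < n" unfolding t''_def using t by auto
          have "B p' = B (s + r')" unfolding p'_def using perB[OF r'Ln t''n] by simp
          moreover have "G p' = G (s + r') + int t'' * Dl"
            unfolding p'_def using perG[OF r'Ln t''n] by simp
          moreover have "int t' * Dl \<le> int t'' * Dl"
            using False tt' unfolding t''_def by (intro mult_right_mono_neg) auto
          moreover have "i \<le> p' \<and> p' < i + Ln"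
            unfolding p'_def i_def t''_def using r r'Ln by (auto simp: algebra_simps)
          ultimately have "Loc i" unfolding Loc_def using p Bp Gp
            by (intro exI[of _ p']) auto
          then show ?thesis by simp
        qed
      qed
    qed
  next
    assume "Loc i \<or> W (G i)"
    then show "Us A B x y i" unfolding Us_def Loc_def W_def using iE
      by (meson order_trans)
  qed
qed

lemma Loc_shift:
  assumes r: "r < Ln" and t: "t + 3 \<le> n"
  shows "Loc (s + t * Ln + r + Ln) = Loc (s + t * Ln + r)"
proof -
  define i where "i = s + t * Ln + r"
  have bnd: "i + Ln + Ln \<le> s + n * Ln"
    using lt_multL[of r Ln "t + 2" n] r t unfolding i_def by (simp add: algebra_simps)
  have key: "B (p + Ln) = B p \<and> G (p + Ln) - G p = Dl" if "i \<le> p" "p < i + Ln" for p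
  proof -
    have "s \<le> p" using that unfolding i_def by simp
    moreover have "p + Ln < s + n * Ln" using that bnd by simp
    ultimately show ?thesis using per[of p] Gshift[of p] by auto
  qed
  have Gi: "G (i + Ln) - G i = Dl" using Gshift[of i] bnd unfolding i_def by simp
  show ?thesis unfolding i_def[symmetric]
  proof
    assume "Loc (i + Ln)"
    then obtain p where p: "i + Ln \<le> p" "p < i + Ln + Ln" "B p" "G (i + Ln) \<le> G p"
      unfolding Loc_def by auto
    have "B (p - Ln + Ln) = B (p - Ln) \<and> G (p - Ln + Ln) - G (p - Ln) = Dl"
      using p by (intro key) auto
    moreover have "p - Ln + Ln = p" using p by simp
    ultimately show "Loc i" unfolding Loc_def using p Gi
      by (intro exI[of _ "p - Ln"]) auto
  next
    assume "Loc i"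
    then obtain p where p: "i \<le> p" "p < i + Ln" "B p" "G i \<le> G p"
      unfolding Loc_def by auto
    show "Loc (i + Ln)" unfolding Loc_def using p Gi key[OF p(1,2)]
      by (intro exI[of _ "p + Ln"]) auto
  qed
qed

definition "Qd t = (\<exists>r<Ln. Us A B x y (s + t * Ln + r) \<noteq> Us A B x y (s + t * Ln + r + Ln))"

lemma Qd_W:
  assumes r: "r < Ln" and t: "t + 3 \<le> n"
    and d: "Us A B x y (s + t * Ln + r) \<noteq> Us A B x y (s + t * Ln + r + Ln)"
  shows "W (G (s + r) + int t * Dl) \<noteq> W (G (s + r) + int t * Dl + Dl)"
proof -
  have e: "s + t * Ln + r + Ln = s + Suc t * Ln + r" by simp
  have "Us A B x y (s + t * Ln + r) = (Loc (s + t * Ln + r) \<or> W (G (s + r) + int t * Dl))"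
    using decomp[OF r, of t] perG[OF r, of t] t by simp
  moreover have "Us A B x y (s + t * Ln + r + Ln) =
      (Loc (s + t * Ln + r + Ln) \<or> W (G (s + r) + int t * Dl + Dl))"
    unfolding e using decomp[OF r, of "Suc t"] perG[OF r, of "Suc t"] t
    by (simp add: algebra_simps)
  ultimately show ?thesis using d Loc_shift[OF r t] by auto
qed

lemma Qd_key:
  assumes xy: "x \<le> y" and q1: "Qd t1" and q2: "Qd t2" and le: "t1 \<le> t2" and t2: "t2 + 3 \<le> n"
  shows "t2 \<le> t1 + Ln * y"
proof (rule ccontr)
  assume c: "\<not> t2 \<le> t1 + Ln * y"
  obtain r1 where r1: "r1 < Ln" "Us A B x y (s + t1 * Ln + r1) \<noteq> Us A B x y (s + t1 * Ln + r1 + Ln)"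
    using q1 unfolding Qd_def by auto
  obtain r2 where r2: "r2 < Ln" "Us A B x y (s + t2 * Ln + r2) \<noteq> Us A B x y (s + t2 * Ln + r2 + Ln)"
    using q2 unfolding Qd_def by auto
  define g1 where "g1 = G (s + r1) + int t1 * Dl"
  define g2 where "g2 = G (s + r2) + int t2 * Dl"
  have w1: "W g1 \<noteq> W (g1 + Dl)" unfolding g1_def using Qd_W[OF r1(1) _ r1(2)] le t2 by simp
  have w2: "W g2 \<noteq> W (g2 + Dl)" unfolding g2_def using Qd_W[OF r2(1) t2 r2(2)] by simp
  have cb: "\<bar>G (s + r2) - G (s + r1)\<bar> \<le> int Ln * int y"
  proof (cases "r1 \<le> r2")
    case True
    then have "\<bar>G (s + r2) - G (s + r1)\<bar> \<le> int (r2 - r1) * int y"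
      using Gbound[of "s + r1" "s + r2"] xy by simp
    also have "\<dots> \<le> int Ln * int y" using r2 by (intro mult_right_mono) auto
    finally show ?thesis .
  next
    case False
    then have "\<bar>G (s + r1) - G (s + r2)\<bar> \<le> int (r1 - r2) * int y"
      using Gbound[of "s + r2" "s + r1"] xy by simp
    also have "\<dots> \<le> int Ln * int y" using r1 by (intro mult_right_mono) auto
    finally show ?thesis by simp
  qed
  define d where "d = int t2 - int t1 - 1"
  have "int (t1 + Ln * y) < int t2" using c by linarith
  then have dge: "d \<ge> int Ln * int y" unfolding d_def by simp
  have "0 \<le> int Ln * int y" by simp
  with dge have d0: "0 \<le> d" by linarith
  have g2e: "g2 - (g1 + Dl) = (G (s + r2) - G (s + r1)) + d * Dl"
    unfolding g1_def g2_def d_def by (simp add: algebra_simps)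
  show False
  proof (cases "Dl \<ge> 0")
    case True
    then have "W g1" "\<not> W (g1 + Dl)" using w1 W_anti[of g1 "g1 + Dl"] by auto
    have "W g2" using w2 W_anti[of g2 "g2 + Dl"] True by auto
    have "Dl \<noteq> 0" using w1 by auto
    then have "Dl \<ge> 1" using True by simp
    then have "d * Dl \<ge> d * 1" using d0 by (intro mult_left_mono) auto
    then have "g1 + Dl \<le> g2" using g2e cb dge by linarith
    then show False using W_anti \<open>W g2\<close> \<open>\<not> W (g1 + Dl)\<close> by blast
  next
    case False
    then have "\<not> W g1" "W (g1 + Dl)" using w1 W_anti[of "g1 + Dl" g1] by auto
    have "\<not> W g2" using w2 W_anti[of "g2 + Dl" g2] False by auto
    have "Dl \<le> -1" using False by simp
    then have "d * Dl \<le> d * (-1)" using d0 by (intro mult_left_mono) auto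
    then have "g2 \<le> g1 + Dl" using g2e cb dge by linarith
    then show False using W_anti \<open>\<not> W g2\<close> \<open>W (g1 + Dl)\<close> by blast
  qed
qed

lemma main_abs:
  assumes xy: "x \<le> y" and ypos: "0 < y" and nge: "Ln * y \<le> n"
  shows "\<exists>n1 n2. n = n1 + Ln * y + n2 \<and>
           (\<forall>i. (s \<le> i \<and> i < s + (n1 - 1) * Ln \<or>
                 s + (n1 + Ln * y) * Ln \<le> i \<and> i < s + (n1 + Ln * y + n2 - 2) * Ln) \<longrightarrow>
                (Us A B x y i \<longleftrightarrow> Us A B x y (i + Ln)))"
proof -
  define Ds where "Ds = {t. t + 3 \<le> n \<and> Qd t}"
  have finDs: "finite Ds" unfolding Ds_def by (rule finite_subset[of _ "{..n}"]) auto
  have good: "Us A B x y i = Us A B x y (i + Ln)"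
    if "s \<le> i" "((i - s) div Ln) \<notin> Ds" "(i - s) div Ln + 3 \<le> n" for i
  proof -
    define t where "t = (i - s) div Ln"
    define r where "r = (i - s) mod Ln"
    have i: "i = s + t * Ln + r" unfolding t_def r_def using that(1)
      by (simp add: mult.commute)
    have "r < Ln" unfolding r_def using Lpos by simp
    moreover have "\<not> Qd t" using that unfolding Ds_def t_def by auto
    ultimately show ?thesis unfolding Qd_def i by auto
  qed
  have tdiv1: "(i - s) div Ln < a" if "i < s + a * Ln" "s \<le> i" for i a
  proof (rule ccontr)
    assume "\<not> (i - s) div Ln < a"
    then have "a * Ln \<le> (i - s) div Ln * Ln" by (intro mult_right_mono) auto
    also have "\<dots> \<le> i - s" by (metis div_mult_mod_eq le_add1)
    finally show False using that by linarith
  qed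
  have tdiv2: "a \<le> (i - s) div Ln" if "s + a * Ln \<le> i" for i a
  proof -
    have "a * Ln \<le> i - s" using that by simp
    then show ?thesis using Lpos by (simp add: less_eq_div_iff_mult_less_eq)
  qed
  have Lny: "1 \<le> Ln * y" using Lpos ypos by simp
  show ?thesis
  proof (cases "Ds = {}")
    case True
    show ?thesis
    proof (intro exI conjI allI impI)
      show "n = 0 + Ln * y + (n - Ln * y)" using nge by simp
    next
      fix i
      assume a: "s \<le> i \<and> i < s + (0 - 1) * Ln \<or>
          s + (0 + Ln * y) * Ln \<le> i \<and> i < s + (0 + Ln * y + (n - Ln * y) - 2) * Ln"
      then have si: "s \<le> i" by auto
      have "(i - s) div Ln < n - 2" using a tdiv1[of i "n - 2"] nge si by auto
      then show "Us A B x y i = Us A B x y (i + Ln)" using good[OF si] True by auto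
    qed
  next
    case False
    define m where "m = Min Ds"
    have mD: "m \<in> Ds" unfolding m_def using False finDs by simp
    have mmin: "m \<le> t" if "t \<in> Ds" for t unfolding m_def using finDs that by simp
    define n1 where "n1 = min (m + 1) (n - Ln * y)"
    show ?thesis
    proof (intro exI conjI allI impI)
      show "n = n1 + Ln * y + (n - Ln * y - n1)" unfolding n1_def using nge by simp
    next
      fix i
      assume a: "s \<le> i \<and> i < s + (n1 - 1) * Ln \<or>
          s + (n1 + Ln * y) * Ln \<le> i \<and> i < s + (n1 + Ln * y + (n - Ln * y - n1) - 2) * Ln"
      then consider (A) "s \<le> i" "i < s + (n1 - 1) * Ln" |
          (B) "s + (n1 + Ln * y) * Ln \<le> i" "i < s + (n1 + Ln * y + (n - Ln * y - n1) - 2) * Ln"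
        by blast
      then show "Us A B x y i = Us A B x y (i + Ln)"
      proof cases
        case A
        have t: "(i - s) div Ln < n1 - 1" using tdiv1 A by simp
        then have "(i - s) div Ln < m" unfolding n1_def by simp
        then have "(i - s) div Ln \<notin> Ds" using mmin by force
        moreover have "(i - s) div Ln + 2 \<le> n - Ln * y" using t unfolding n1_def by auto
        then have "(i - s) div Ln + 3 \<le> n" using Lny nge by linarith
        ultimately show ?thesis using good A(1) by simp
      next
        case B
        have si: "s \<le> i" using B by simp
        have t1: "n1 + Ln * y \<le> (i - s) div Ln" using tdiv2 B(1) by simp
        have e: "n1 + Ln * y + (n - Ln * y - n1) - 2 = n - 2" unfolding n1_def using nge by simp
        have t2: "(i - s) div Ln < n - 2" using tdiv1 B(2) si unfolding e by simp
        have "(i - s) div Ln \<notin> Ds"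
        proof
          assume tD: "(i - s) div Ln \<in> Ds"
          have "(i - s) div Ln \<le> m + Ln * y"
            using Qd_key[OF xy, of m "(i - s) div Ln"] mD tD mmin[OF tD] unfolding Ds_def by auto
          then show False using t1 t2 unfolding n1_def by auto
        qed
        then show ?thesis using good si t2 by simp
      qed
    qed
  qed
qed

end

lemma cs_Suc: "k < length Ps \<Longrightarrow> comp_start Ps (Suc k) = comp_start Ps k + length (Ps ! k)"
  by (simp add: comp_start_def take_Suc_conv_app_nth)

lemma cs_len: "comp_start Ps (length Ps) = aps_len Ps"
  by (simp add: comp_start_def aps_len_def)

lemma cs_mono: "k \<le> k' \<Longrightarrow> k' \<le> length Ps \<Longrightarrow> comp_start Ps k \<le> comp_start Ps k'"
proof (induction k' rule: dec_induct)
  case base then show ?case by simp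
next
  case (step k') then show ?case using cs_Suc[of k' Ps] by simp
qed

lemma aps_at_loc: "k < length Ps \<Longrightarrow> j < length (Ps ! k) \<Longrightarrow> aps_at Ps (comp_start Ps k + j) = Ps ! k ! j"
proof -
  assume k: "k < length Ps" and j: "j < length (Ps ! k)"
  have "concat Ps = concat (take k Ps) @ Ps ! k @ concat (drop (Suc k) Ps)"
    using id_take_nth_drop[OF k] by (metis concat.simps(2) concat_append)
  then show ?thesis unfolding aps_at_def comp_start_def using j by (simp add: nth_append)
qed

lemma loc_exists_aux: "j \<le> length Ps \<Longrightarrow> l < comp_start Ps j \<Longrightarrow> \<exists>k<j. l \<in> loc Ps k"
proof (induction j arbitrary: l)
  case 0 then show ?case by (simp add: comp_start_def)
next
  case (Suc j)
  show ?case
  proof (cases "l < comp_start Ps j")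
    case True
    then obtain k where "k < j" "l \<in> loc Ps k" using Suc.IH Suc.prems by fastforce
    then show ?thesis by (meson less_SucI)
  next
    case False
    then have "l \<in> loc Ps j" using Suc.prems cs_Suc[of j Ps] unfolding loc_def by simp
    then show ?thesis by blast
  qed
qed

lemma loc_exists: "l < aps_len Ps \<Longrightarrow> \<exists>k<length Ps. l \<in> loc Ps k"
  using loc_exists_aux[of "length Ps" Ps l] cs_len[of Ps] by simp

lemma loc_unique: "k1 < length Ps \<Longrightarrow> k2 < length Ps \<Longrightarrow> l \<in> loc Ps k1 \<Longrightarrow> l \<in> loc Ps k2 \<Longrightarrow> k1 = k2"
proof (rule ccontr)
  assume a: "k1 < length Ps" "k2 < length Ps" "l \<in> loc Ps k1" "l \<in> loc Ps k2" "k1 \<noteq> k2"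
  have lt: "comp_start Ps (Suc ka) \<le> comp_start Ps kb" if "ka < kb" "kb < length Ps" for ka kb
    using cs_mono[of "Suc ka" kb Ps] that by simp
  show False
  proof (cases "k1 < k2")
    case True
    then show ?thesis using lt[of k1 k2] a cs_Suc[of k1 Ps] unfolding loc_def by simp
  next
    case False
    then have "k2 < k1" using a by simp
    then show ?thesis using lt[of k2 k1] a cs_Suc[of k2 Ps] unfolding loc_def by simp
  qed
qed

definition cmp :: "('s, 'ap, 'c) apath list \<Rightarrow> nat \<Rightarrow> nat" where
  "cmp Ps l = (THE k. k < length Ps \<and> l \<in> loc Ps k)"

definition ofs :: "('s, 'ap, 'c) apath list \<Rightarrow> nat \<Rightarrow> nat" where
  "ofs Ps l = l - comp_start Ps (cmp Ps l)"

lemma cmp_eq: "k < length Ps \<Longrightarrow> l \<in> loc Ps k \<Longrightarrow> cmp Ps l = k"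
  unfolding cmp_def by (rule the_equality) (auto dest: loc_unique)

lemma cmp_props:
  assumes "l < aps_len Ps"
  shows "cmp Ps l < length Ps" "l \<in> loc Ps (cmp Ps l)" "ofs Ps l < length (Ps ! cmp Ps l)"
    "l = comp_start Ps (cmp Ps l) + ofs Ps l"
proof -
  obtain k where k: "k < length Ps" "l \<in> loc Ps k" using loc_exists[OF assms] by blast
  then have c: "cmp Ps l = k" by (rule cmp_eq)
  show "cmp Ps l < length Ps" "l \<in> loc Ps (cmp Ps l)" using k c by auto
  show "ofs Ps l < length (Ps ! cmp Ps l)" "l = comp_start Ps (cmp Ps l) + ofs Ps l"
    using k c unfolding ofs_def loc_def by auto
qed

lemma cmp_at: "k < length Ps \<Longrightarrow> j < length (Ps ! k) \<Longrightarrow>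
    cmp Ps (comp_start Ps k + j) = k \<and> ofs Ps (comp_start Ps k + j) = j"
proof -
  assume a: "k < length Ps" "j < length (Ps ! k)"
  then have "cmp Ps (comp_start Ps k + j) = k" by (intro cmp_eq) (auto simp: loc_def)
  then show ?thesis unfolding ofs_def by simp
qed

lemma loc_lt: "k < length Ps \<Longrightarrow> l \<in> loc Ps k \<Longrightarrow> l < aps_len Ps"
  using cs_mono[of "Suc k" "length Ps" Ps] cs_Suc[of k Ps] cs_len[of Ps] unfolding loc_def by simp

lemma aps_at_cmp: "l < aps_len Ps \<Longrightarrow> aps_at Ps l = Ps ! cmp Ps l ! ofs Ps l"
proof -
  assume l: "l < aps_len Ps"
  show ?thesis using aps_at_loc[OF cmp_props(1,3)[OF l]] cmp_props(4)[OF l] by simp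
qed

lemma interval_eq: "{a..b} = {c..<d} \<Longrightarrow> (a::nat) \<le> b \<Longrightarrow> a = c \<and> b = d - 1"
proof -
  assume e: "{a..b} = {c..<d}" and ab: "a \<le> b"
  have "a \<in> {a..b}" "b \<in> {a..b}" using ab by auto
  then have 1: "a \<in> {c..<d}" "b \<in> {c..<d}" unfolding e by auto
  then have "c \<in> {c..<d}" "d - 1 \<in> {c..<d}" by auto
  then have "c \<in> {a..b}" "d - 1 \<in> {a..b}" unfolding e .
  then show ?thesis using 1 by auto
qed

lemma step_lemma:
  assumes nemp: "\<forall>P\<in>set Ps. P \<noteq> []" and tr: "cs_trans E Ps l l'" and l: "l < aps_len Ps"
  shows "l' < aps_len Ps \<and>
    ((cmp Ps l' = cmp Ps l \<and> ofs Ps l' = Suc (ofs Ps l) mod length (Ps ! cmp Ps l)) \<or>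
     (cmp Ps l' = Suc (cmp Ps l) \<and> ofs Ps l' = 0 \<and> Suc (ofs Ps l) = length (Ps ! cmp Ps l)))"
proof -
  define k where "k = cmp Ps l"
  define j where "j = ofs Ps l"
  have k: "k < length Ps" "j < length (Ps ! k)" "l = comp_start Ps k + j"
    using cmp_props[OF l] unfolding k_def j_def by auto
  from tr consider (F) "l' = Suc l" "l' < aps_len Ps" |
      (B) k' where "l' < l" "k' < length Ps" "is_loop E (Ps ! k')" "{l'..l} = loc Ps k'"
    unfolding cs_trans_def by blast
  then show ?thesis
  proof cases
    case F
    show ?thesis
    proof (cases "Suc j < length (Ps ! k)")
      case True
      have "l' = comp_start Ps k + Suc j" using F k by simp
      then show ?thesis using cmp_at[OF k(1) True] True F unfolding k_def[symmetric] j_def[symmetric] by simp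
    next
      case False
      then have sj: "Suc j = length (Ps ! k)" using k by simp
      have l'e: "l' = comp_start Ps (Suc k)" using F k sj cs_Suc[OF k(1)] by simp
      have "Suc k < length Ps"
      proof (rule ccontr)
        assume "\<not> Suc k < length Ps"
        then have "Suc k = length Ps" using k by simp
        then show False using l'e F cs_len[of Ps] by simp
      qed
      moreover have "0 < length (Ps ! Suc k)" using nemp calculation by auto
      ultimately have "cmp Ps l' = Suc k \<and> ofs Ps l' = 0" using cmp_at[of "Suc k" Ps 0] l'e by simp
      then show ?thesis using F sj unfolding k_def[symmetric] j_def[symmetric] by simp
    qed
  next
    case B
    have "l \<in> loc Ps k'" using B by (auto simp flip: B(4))
    then have kk: "k' = k" using cmp_eq[OF B(2)] unfolding k_def by simp
    have "l' = comp_start Ps k \<and> l = comp_start Ps k + length (Ps ! k) - 1"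
      using interval_eq[OF B(4)[unfolded loc_def]] B(1) kk by simp
    then have "l' = comp_start Ps k + 0" "Suc j = length (Ps ! k)" using k by auto
    moreover have "0 < length (Ps ! k)" using k(2) by linarith
    ultimately show ?thesis using cmp_at[OF k(1), of 0] B l
      unfolding k_def[symmetric] j_def[symmetric] by simp
  qed
qed

lemma back_in_loop:
  assumes tr: "cs_trans E Ps l l'" and "l' \<le> l0" "l0 < l"
  shows "\<exists>k<length Ps. is_loop E (Ps ! k) \<and> l0 \<in> loc Ps k"
proof -
  have "l' < l" using assms by simp
  then obtain k' where "k' < length Ps" "is_loop E (Ps ! k')" "{l'..l} = loc Ps k'"
    using tr unfolding cs_trans_def by auto
  moreover have "l0 \<in> {l'..l}" using assms by simp
  ultimately show ?thesis by blast
qed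

lemma periodic_props:
  assumes p: "periodic Lset (comps Ps a b)" and ab: "a \<le> c" "c \<le> b" "b < length Ps"
  shows "length (Ps ! c) = length (Ps ! a) \<and> (\<forall>j<length (Ps ! a). lab (Ps ! c ! j) \<inter> Lset = lab (Ps ! a ! j) \<inter> Lset)"
proof -
  have mem: "Ps ! d \<in> set (comps Ps a b)" if "a \<le> d" "d \<le> b" for d
  proof -
    have "comps Ps a b ! (d - a) = Ps ! d" unfolding comps_def using that ab by simp
    moreover have "d - a < length (comps Ps a b)" unfolding comps_def using that ab by simp
    ultimately show ?thesis by (metis nth_mem)
  qed
  have "\<forall>P\<in>set (comps Ps a b). \<forall>Q\<in>set (comps Ps a b). length P = length Q \<and>
        (\<forall>i<length P. lab (P ! i) \<inter> Lset = lab (Q ! i) \<inter> Lset)" using p unfolding periodic_def .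
  then have "length (Ps ! c) = length (Ps ! a) \<and>
        (\<forall>i<length (Ps ! c). lab (Ps ! c ! i) \<inter> Lset = lab (Ps ! a ! i) \<inter> Lset)"
    using bspec[OF bspec[OF _ mem[of c]] mem[of a]] ab by simp
  then show ?thesis by simp
qed

lemma sum_ind: "(\<Sum>j<m. if P j then int y - int x else - int x) = int y * int (card {j. j < m \<and> P j}) - int x * int m"
proof (induction m)
  case 0 then show ?case by simp
next
  case (Suc m)
  have "{j. j < Suc m \<and> P j} = (if P m then insert m {j. j < m \<and> P j} else {j. j < m \<and> P j})"
    by (auto simp: less_Suc_eq)
  then have c: "card {j. j < Suc m \<and> P j} = (if P m then Suc (card {j. j < m \<and> P j}) else card {j. j < m \<and> P j})"
    by auto
  show ?case unfolding c using Suc by (simp add: algebra_simps)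
qed

lemma Gs_lower: "v \<le> u \<Longrightarrow> Gs A x y u - Gs A x y v \<ge> - int x * int (u - v)"
proof (induction u rule: dec_induct)
  case base then show ?case by simp
next
  case (step u)
  then show ?case by (auto simp: Gs_Suc Suc_diff_le algebra_simps)
qed

locale arun =
  fixes E :: "('s \<times> 's) set" and Ps :: "('s, 'ap, 'c) apath list" and \<sigma> :: "nat \<Rightarrow> nat"
  assumes nemp: "\<forall>P\<in>set Ps. P \<noteq> []" and ne: "Ps \<noteq> []" and run: "\<sigma> \<in> Runs E Ps"
begin

lemma Npos: "0 < aps_len Ps"
proof -
  have "0 < length (Ps ! 0)" using nemp ne by auto
  then show ?thesis using loc_lt[of 0 Ps 0] ne unfolding loc_def comp_start_def by simp
qed

lemma run_trans: "cs_trans E Ps (\<sigma> t) (\<sigma> (Suc t))"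
  using run unfolding Runs_def cs_run_def by auto

lemma run_lt: "\<sigma> t < aps_len Ps"
proof (induction t)
  case 0 then show ?case using run Npos unfolding Runs_def cs_run_def by simp
next
  case (Suc t) then show ?case using step_lemma[OF nemp run_trans Suc] by simp
qed

lemma run_visit: "l < aps_len Ps \<Longrightarrow> \<exists>t. \<sigma> t = l"
  using run unfolding Runs_def by auto

abbreviation "cm t \<equiv> cmp Ps (\<sigma> t)"
abbreviation "ofst t \<equiv> ofs Ps (\<sigma> t)"

lemma run_step:
  "(cm (Suc t) = cm t \<and> ofst (Suc t) = Suc (ofst t) mod length (Ps ! cm t)) \<or>
   (cm (Suc t) = Suc (cm t) \<and> ofst (Suc t) = 0 \<and> Suc (ofst t) = length (Ps ! cm t))"
  using step_lemma[OF nemp run_trans run_lt] by blast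

lemma run_props: "cm t < length Ps" "ofst t < length (Ps ! cm t)" "\<sigma> t = comp_start Ps (cm t) + ofst t"
  using cmp_props[OF run_lt] by auto

lemma run_mono: "t \<le> t' \<Longrightarrow> cm t \<le> cm t'"
proof (induction t' rule: dec_induct)
  case base then show ?case by simp
next
  case (step t') then show ?case using run_step[of t'] by auto
qed

lemma run_ofs_step: "ofst (Suc t) = Suc (ofst t) mod length (Ps ! cm t)"
  using run_step[of t] by auto

lemma run_ofs:
  assumes "t0 \<le> t" "0 < Ln" "ofst t0 < Ln" "\<And>t'. t0 \<le> t' \<Longrightarrow> t' < t \<Longrightarrow> length (Ps ! cm t') = Ln"
  shows "ofst t = (ofst t0 + (t - t0)) mod Ln"
  using assms
proof (induction t rule: dec_induct)
  case base then show ?case by simp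
next
  case (step t)
  have "ofst (Suc t) = Suc (ofst t) mod Ln" using run_ofs_step[of t] step by simp
  also have "\<dots> = Suc ((ofst t0 + (t - t0)) mod Ln) mod Ln" using step by simp
  also have "\<dots> = (ofst t0 + (Suc t - t0)) mod Ln" using step(1) by (simp add: mod_Suc_eq Suc_diff_le)
  finally show ?case .
qed

lemma run_stay: "ofst t + d < length (Ps ! cm t) \<Longrightarrow> cm (t + d) = cm t \<and> ofst (t + d) = ofst t + d"
proof (induction d)
  case 0 then show ?case by simp
next
  case (Suc d)
  then have IH: "cm (t + d) = cm t \<and> ofst (t + d) = ofst t + d" by simp
  then have "Suc (ofst (t + d)) < length (Ps ! cm (t + d))" using Suc.prems by simp
  then show ?case using run_step[of "t + d"] IH by auto
qed

lemma run_next_bound: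
  assumes L1: "length (Ps ! cm i) = Ln" and L2: "Suc (cm i) < length Ps \<longrightarrow> length (Ps ! Suc (cm i)) = Ln"
  shows "cm (i + Ln) \<le> Suc (cm i)"
proof -
  define j where "j = ofst i"
  have jL: "j < Ln" using run_props(2)[of i] L1 unfolding j_def by simp
  define t1 where "t1 = i + (Ln - 1 - j)"
  have s1: "cm t1 = cm i \<and> ofst t1 = Ln - 1"
    using run_stay[of i "Ln - 1 - j"] jL L1 unfolding t1_def j_def by simp
  have s2: "(cm (Suc t1) = cm i \<or> cm (Suc t1) = Suc (cm i)) \<and> ofst (Suc t1) = 0"
    using run_step[of t1] s1 L1 jL by auto
  have "length (Ps ! cm (Suc t1)) = Ln" using s2 L1 L2 run_props(1)[of "Suc t1"] by auto
  then have "cm (Suc t1 + j) = cm (Suc t1)" using run_stay[of "Suc t1" j] s2 jL by simp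
  moreover have "Suc t1 + j = i + Ln" unfolding t1_def using jL by simp
  ultimately show ?thesis using s2 by auto
qed

lemma not_in_loop:
  assumes "atype (aps_at Ps l0) = R" "k < length Ps" "is_loop E (Ps ! k)"
  shows "l0 \<notin> loc Ps k"
proof
  assume "l0 \<in> loc Ps k"
  define j where "j = l0 - comp_start Ps k"
  have j: "j < length (Ps ! k)" "l0 = comp_start Ps k + j"
    using \<open>l0 \<in> loc Ps k\<close> unfolding loc_def j_def by auto
  then have "aps_at Ps l0 \<in> set (Ps ! k)" using aps_at_loc[OF assms(2) j(1)] by simp
  then show False using assms unfolding is_loop_def by auto
qed

lemma row_times:
  assumes R: "atype (aps_at Ps l0) = R" and i: "\<sigma> i = l0"
  shows "\<forall>t<i. \<sigma> t < l0" "\<forall>t>i. \<sigma> t > l0"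
proof -
  have stepgt: "\<sigma> (Suc t) > l0" if "\<sigma> t \<ge> l0" for t
  proof (rule ccontr)
    assume c: "\<not> \<sigma> (Suc t) > l0"
    have tr: "cs_trans E Ps (\<sigma> t) (\<sigma> (Suc t))" by (rule run_trans)
    have "\<sigma> (Suc t) \<noteq> Suc (\<sigma> t)" using c that by simp
    then obtain k' where k': "\<sigma> (Suc t) < \<sigma> t" "k' < length Ps" "is_loop E (Ps ! k')"
        "{\<sigma> (Suc t)..\<sigma> t} = loc Ps k'"
      using tr unfolding cs_trans_def by blast
    have "l0 \<in> {\<sigma> (Suc t)..\<sigma> t}" using c that by simp
    then show False using not_in_loop[OF R k'(2,3)] k'(4) by simp
  qed
  have after: "\<sigma> (t + Suc d) > l0" if "\<sigma> t \<ge> l0" for t d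
  proof (induction d)
    case 0 then show ?case using stepgt[OF that] by simp
  next
    case (Suc d) then show ?case using stepgt[of "t + Suc d"] by simp
  qed
  show "\<forall>t>i. \<sigma> t > l0"
  proof (intro allI impI)
    fix t assume "t > i"
    then obtain d where "t = Suc (i + d)" using less_imp_Suc_add by blast
    then have "t = i + Suc d" by simp
    then show "\<sigma> t > l0" using after[of i d] i by simp
  qed
  show "\<forall>t<i. \<sigma> t < l0"
  proof (intro allI impI)
    fix t assume "t < i"
    then obtain d where "i = Suc (t + d)" using less_imp_Suc_add by blast
    then have d: "i = t + Suc d" by simp
    show "\<sigma> t < l0"
    proof (rule ccontr)
      assume "\<not> \<sigma> t < l0"
      then show False using after[of t d] d i by simp
    qed
  qed
qed

lemma run_theta: "\<exists>\<theta>. (\<forall>t c. \<theta> t c = (\<Sum>t'<t. upd (aps_at Ps (\<sigma> t')) c)) \<and>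
    (\<forall>t. \<forall>g\<in>grd (aps_at Ps (\<sigma> (Suc t))). guard_holds (\<theta> (Suc t)) g)"
proof -
  obtain \<theta> :: "nat \<Rightarrow> 'c \<Rightarrow> int" where th: "\<theta> 0 = (\<lambda>c. 0)"
    "\<And>i. \<theta> (Suc i) = (\<lambda>c. \<theta> i c + upd (aps_at Ps (\<sigma> i)) c)"
    "\<And>i. \<forall>g\<in>grd (aps_at Ps (\<sigma> (Suc i))). guard_holds (\<theta> (Suc i)) g"
    using run unfolding Runs_def cs_run_def by blast
  have "\<theta> t c = (\<Sum>t'<t. upd (aps_at Ps (\<sigma> t')) c)" for t c
    by (induction t) (auto simp: th)
  then show ?thesis using th(3) by blast
qed

lemma run_pattern:
  assumes p: "periodic Lset (comps Ps a b)" and b: "b < length Ps" and t: "a \<le> cm t" "cm t \<le> b"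
  shows "length (Ps ! cm t) = length (Ps ! a)"
    "lab (aps_at Ps (\<sigma> t)) \<inter> Lset = lab (Ps ! a ! ofst t) \<inter> Lset"
proof -
  have pp: "length (Ps ! cm t) = length (Ps ! a) \<and>
      (\<forall>j<length (Ps ! a). lab (Ps ! cm t ! j) \<inter> Lset = lab (Ps ! a ! j) \<inter> Lset)"
    by (rule periodic_props[OF p t b])
  then show "length (Ps ! cm t) = length (Ps ! a)" by simp
  have "aps_at Ps (\<sigma> t) = Ps ! cm t ! ofst t" using aps_at_cmp[OF run_lt] .
  moreover have "ofst t < length (Ps ! a)" using run_props(2)[of t] pp by simp
  ultimately show "lab (aps_at Ps (\<sigma> t)) \<inter> Lset = lab (Ps ! a ! ofst t) \<inter> Lset" using pp by simp
qed

lemma region_pattern: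
  assumes p: "periodic Lset (comps Ps a b)" and b: "b < length Ps" and ab: "a \<le> b" and le: "e1 \<le> e2"
    and reg: "\<And>t. e1 \<le> t \<Longrightarrow> t < e2 + Ln \<Longrightarrow> a \<le> cm t \<and> cm t \<le> b"
    and Ln: "Ln = length (Ps ! a)" and oe: "ofst e1 = ofst e2"
  shows "\<exists>q. e2 = e1 + q * Ln \<and> (\<forall>d f. d < q * Ln + Ln \<longrightarrow> f \<in> Lset \<longrightarrow>
            (f \<in> lab (aps_at Ps (\<sigma> (e1 + d)))) = (f \<in> lab (Ps ! a ! ((ofst e1 + d) mod Ln))))"
proof -
  have "a < length Ps" using ab b by simp
  then have "Ps ! a \<in> set Ps" by simp
  then have Lpos: "0 < Ln" using Ln nemp by auto
  have lens: "length (Ps ! cm t) = Ln" if "e1 \<le> t" "t < e2 + Ln" for t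
    using run_pattern(1)[OF p b] reg[OF that] Ln by simp
  have o1: "ofst e1 < Ln" using lens[of e1] run_props(2)[of e1] Lpos le by simp
  have ofs_t: "ofst t = (ofst e1 + (t - e1)) mod Ln" if "e1 \<le> t" "t < e2 + Ln" for t
    by (rule run_ofs[OF that(1) Lpos o1]) (use lens that in auto)
  have "ofst e1 = (ofst e1 + (e2 - e1)) mod Ln" using ofs_t[of e2] le Lpos oe by simp
  then have "(ofst e1 + (e2 - e1)) mod Ln = ofst e1 mod Ln" using o1 by simp
  then have "Ln dvd (e2 - e1)" using mod_eq_dvd_iff_nat[of "ofst e1" "ofst e1 + (e2 - e1)" Ln] by simp
  then obtain q where q: "e2 - e1 = Ln * q" by (auto elim: dvdE)
  show ?thesis
  proof (intro exI conjI allI impI)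
    show "e2 = e1 + q * Ln" using q le by (simp add: mult.commute)
  next
    fix d f assume d: "d < q * Ln + Ln" and f: "f \<in> Lset"
    have r: "e1 \<le> e1 + d" "e1 + d < e2 + Ln" using d q le by (auto simp: mult.commute)
    have "lab (aps_at Ps (\<sigma> (e1 + d))) \<inter> Lset = lab (Ps ! a ! ofst (e1 + d)) \<inter> Lset"
      using run_pattern(2)[OF p b] reg[OF r] by simp
    moreover have "ofst (e1 + d) = (ofst e1 + d) mod Ln" using ofs_t[OF r] by simp
    ultimately have "lab (aps_at Ps (\<sigma> (e1 + d))) \<inter> Lset = lab (Ps ! a ! ((ofst e1 + d) mod Ln)) \<inter> Lset"
      by simp
    then show "(f \<in> lab (aps_at Ps (\<sigma> (e1 + d)))) = (f \<in> lab (Ps ! a ! ((ofst e1 + d) mod Ln)))"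
      using f by (metis Int_iff)
  qed
qed

end

lemma self_subf: "f \<in> subf f"
  by (cases f) auto

lemma sub_And: "a \<in> strict_subf (And a b)" "b \<in> strict_subf (And a b)"
  by (auto simp: strict_subf_def self_subf)
lemma sub_Not: "a \<in> strict_subf (Not a)"
  by (auto simp: strict_subf_def self_subf)
lemma sub_Next: "a \<in> strict_subf (Next a)"
  by (auto simp: strict_subf_def self_subf)
lemma sub_Until: "a \<in> strict_subf (Until a x y b)" "b \<in> strict_subf (Until a x y b)"
  by (auto simp: strict_subf_def self_subf)

lemma sat_P_Until: "sat_P lam Ps \<sigma> i (Until a x y b) =
    Us (\<lambda>t. sat_P lam Ps \<sigma> t a) (\<lambda>t. sat_P lam Ps \<sigma> t b) x y i"
  unfolding sat_P_def by (rule sat_Until_Us)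

lemma count_sum: "(\<Sum>j<length u. Fh (\<lambda>j. a \<in> lab (u ! j)) x y j) = int y * int (count_lab a u) - int x * int (length u)"
  unfolding Fh_def count_lab_def by (rule sum_ind)

context arun
begin

lemma IH_sub:
  assumes "\<forall>f\<in>strict_subf \<Phi>. \<forall>l'<aps_len Ps. consistent_loc lam E Ps f l' \<and>
      (\<forall>i. \<sigma> i = l' \<longrightarrow> (f \<in> lab (aps_at Ps l')) = sat_P lam Ps \<sigma> i f)"
    and "g \<in> strict_subf \<Phi>"
  shows "(g \<in> lab (aps_at Ps (\<sigma> t))) = sat_P lam Ps \<sigma> t g"
  using assms run_lt[of t] by blast

lemma d_transfer:
  fixes a b F :: "'ap fltl"
  assumes per: "periodic {a, b, F} (comps Ps a0 b0)" and b0: "b0 < length Ps" and ab: "a0 \<le> b0"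
    and le: "e1 \<le> e2"
    and reg: "\<And>t. e1 \<le> t \<Longrightarrow> t < e2 + Ln \<Longrightarrow> a0 \<le> cm t \<and> cm t \<le> b0"
    and Ln: "Ln = length (Ps ! a0)" and oe: "ofst e1 = ofst e2"
    and kk: "a0 \<le> kk" "kk \<le> b0"
  shows "(F \<in> lab (aps_at Ps (\<sigma> e1))) = (F \<in> lab (aps_at Ps (\<sigma> e2)))"
    and "good x y a (Ps ! kk) \<or> neutral x y a (Ps ! kk) \<Longrightarrow>
       Us (\<lambda>t. a \<in> lab (aps_at Ps (\<sigma> t))) (\<lambda>t. b \<in> lab (aps_at Ps (\<sigma> t))) x y e2 \<Longrightarrow>
       Us (\<lambda>t. a \<in> lab (aps_at Ps (\<sigma> t))) (\<lambda>t. b \<in> lab (aps_at Ps (\<sigma> t))) x y e1"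
    and "bad x y a (Ps ! kk) \<Longrightarrow>
       Us (\<lambda>t. a \<in> lab (aps_at Ps (\<sigma> t))) (\<lambda>t. b \<in> lab (aps_at Ps (\<sigma> t))) x y e1 \<Longrightarrow>
       Us (\<lambda>t. a \<in> lab (aps_at Ps (\<sigma> t))) (\<lambda>t. b \<in> lab (aps_at Ps (\<sigma> t))) x y e2"
proof -
  obtain q where q: "e2 = e1 + q * Ln" and pat: "\<And>d f. d < q * Ln + Ln \<Longrightarrow> f \<in> {a, b, F} \<Longrightarrow>
      (f \<in> lab (aps_at Ps (\<sigma> (e1 + d)))) = (f \<in> lab (Ps ! a0 ! ((ofst e1 + d) mod Ln)))"
    using region_pattern[OF per b0 ab le reg Ln oe] by blast
  have "a0 < length Ps" using ab b0 by simp
  then have Lpos: "0 < Ln" using Ln nemp by (metis length_greater_0_conv nth_mem)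
  show "(F \<in> lab (aps_at Ps (\<sigma> e1))) = (F \<in> lab (aps_at Ps (\<sigma> e2)))"
  proof -
    have "(F \<in> lab (aps_at Ps (\<sigma> (e1 + 0)))) = (F \<in> lab (Ps ! a0 ! ((ofst e1 + 0) mod Ln)))"
      using pat[of 0 F] Lpos by simp
    moreover have "(F \<in> lab (aps_at Ps (\<sigma> (e1 + q * Ln)))) = (F \<in> lab (Ps ! a0 ! ((ofst e1 + q * Ln) mod Ln)))"
      using pat[of "q * Ln" F] Lpos by simp
    moreover have "(ofst e1 + q * Ln) mod Ln = (ofst e1 + 0) mod Ln" by simp
    ultimately show ?thesis using q by simp
  qed
  define hA where "hA = (\<lambda>j. a \<in> lab (Ps ! a0 ! j))"
  define hB where "hB = (\<lambda>j. b \<in> lab (Ps ! a0 ! j))"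
  have upat: "\<And>d. d < q * Ln + Ln \<Longrightarrow>
      (a \<in> lab (aps_at Ps (\<sigma> (e1 + d)))) = hA ((ofst e1 + d) mod Ln) \<and>
      (b \<in> lab (aps_at Ps (\<sigma> (e1 + d)))) = hB ((ofst e1 + d) mod Ln)"
    unfolding hA_def hB_def using pat by blast
  have pk: "length (Ps ! kk) = length (Ps ! a0) \<and>
      (\<forall>j<length (Ps ! a0). lab (Ps ! kk ! j) \<inter> {a, b, F} = lab (Ps ! a0 ! j) \<inter> {a, b, F})"
    by (rule periodic_props[OF per kk b0])
  have Dsum: "(\<Sum>j<Ln. Fh hA x y j) = int y * int (count_lab a (Ps ! kk)) - int x * int Ln"
  proof -
    have "(\<Sum>j<Ln. Fh hA x y j) = (\<Sum>j<length (Ps ! kk). Fh (\<lambda>j. a \<in> lab (Ps ! kk ! j)) x y j)"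
    proof (rule sum.cong)
      show "{..<Ln} = {..<length (Ps ! kk)}" using pk Ln by simp
    next
      fix j assume "j \<in> {..<length (Ps ! kk)}"
      then have "lab (Ps ! kk ! j) \<inter> {a, b, F} = lab (Ps ! a0 ! j) \<inter> {a, b, F}" using pk by auto
      then have "(a \<in> lab (Ps ! kk ! j)) = hA j" unfolding hA_def by blast
      then show "Fh hA x y j = Fh (\<lambda>j. a \<in> lab (Ps ! kk ! j)) x y j" unfolding Fh_def by simp
    qed
    also have "\<dots> = int y * int (count_lab a (Ps ! kk)) - int x * int (length (Ps ! kk))"
      by (rule count_sum)
    finally show ?thesis using pk Ln by simp
  qed
  show "good x y a (Ps ! kk) \<or> neutral x y a (Ps ! kk) \<Longrightarrow>
       Us (\<lambda>t. a \<in> lab (aps_at Ps (\<sigma> t))) (\<lambda>t. b \<in> lab (aps_at Ps (\<sigma> t))) x y e2 \<Longrightarrow>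
       Us (\<lambda>t. a \<in> lab (aps_at Ps (\<sigma> t))) (\<lambda>t. b \<in> lab (aps_at Ps (\<sigma> t))) x y e1"
  proof -
    assume g: "good x y a (Ps ! kk) \<or> neutral x y a (Ps ! kk)"
      and u: "Us (\<lambda>t. a \<in> lab (aps_at Ps (\<sigma> t))) (\<lambda>t. b \<in> lab (aps_at Ps (\<sigma> t))) x y e2"
    have "x * length (Ps ! kk) \<le> y * count_lab a (Ps ! kk)" using g unfolding good_def neutral_def by auto
    then have "int x * int Ln \<le> int y * int (count_lab a (Ps ! kk))" using pk Ln
      by (metis of_nat_le_iff of_nat_mult)
    then have D: "0 \<le> (\<Sum>j<Ln. Fh hA x y j)" using Dsum by simp
    show ?thesis
      by (rule U1[OF Lpos upat D]) (use u q in auto)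
  qed
  show "bad x y a (Ps ! kk) \<Longrightarrow>
       Us (\<lambda>t. a \<in> lab (aps_at Ps (\<sigma> t))) (\<lambda>t. b \<in> lab (aps_at Ps (\<sigma> t))) x y e1 \<Longrightarrow>
       Us (\<lambda>t. a \<in> lab (aps_at Ps (\<sigma> t))) (\<lambda>t. b \<in> lab (aps_at Ps (\<sigma> t))) x y e2"
  proof -
    assume g: "bad x y a (Ps ! kk)"
      and u: "Us (\<lambda>t. a \<in> lab (aps_at Ps (\<sigma> t))) (\<lambda>t. b \<in> lab (aps_at Ps (\<sigma> t))) x y e1"
    have "y * count_lab a (Ps ! kk) \<le> x * length (Ps ! kk)" using g unfolding bad_def by auto
    then have "int y * int (count_lab a (Ps ! kk)) \<le> int x * int Ln" using pk Ln
      by (metis of_nat_le_iff of_nat_mult)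
    then have D: "(\<Sum>j<Ln. Fh hA x y j) \<le> 0" using Dsum by simp
    have "Us (\<lambda>t. a \<in> lab (aps_at Ps (\<sigma> t))) (\<lambda>t. b \<in> lab (aps_at Ps (\<sigma> t))) x y (e1 + q * Ln)"
      by (rule U2[OF Lpos upat D u]) auto
    then show ?thesis using q by simp
  qed
qed

lemma visit_at:
  assumes "k < length Ps" "j < length (Ps ! k)"
  shows "\<exists>t. \<sigma> t = comp_start Ps k + j \<and> cm t = k \<and> ofst t = j"
proof -
  have "comp_start Ps k + j \<in> loc Ps k" using assms unfolding loc_def by simp
  then have "comp_start Ps k + j < aps_len Ps" using loc_lt assms by blast
  then obtain t where "\<sigma> t = comp_start Ps k + j" using run_visit by blast
  then show ?thesis using cmp_at[OF assms] by auto
qed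

lemma gnb: "good x y a u \<or> neutral x y a u \<or> bad x y a u"
  unfolding good_def neutral_def bad_def by auto

theorem correct:
  "consistent_loc lam E Ps f l \<Longrightarrow>
    \<forall>i. \<sigma> i = l \<longrightarrow> ((f \<in> lab (aps_at Ps l)) = sat_P lam Ps \<sigma> i f)"
proof (induction rule: consistent_loc.induct)
  case (cons_prop k l p)
  then show ?case by (auto simp: sat_P_def)
next
  case (cons_and k l a b)
  have ha: "\<And>t. (a \<in> lab (aps_at Ps (\<sigma> t))) = sat_P lam Ps \<sigma> t a"
    using IH_sub[OF cons_and.IH sub_And(1)] .
  have hb: "\<And>t. (b \<in> lab (aps_at Ps (\<sigma> t))) = sat_P lam Ps \<sigma> t b"
    using IH_sub[OF cons_and.IH sub_And(2)] .
  show ?case using cons_and.hyps(3) ha hb by (auto simp: sat_P_def)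
next
  case (cons_not k l a)
  have ha: "\<And>t. (a \<in> lab (aps_at Ps (\<sigma> t))) = sat_P lam Ps \<sigma> t a"
    using IH_sub[OF cons_not.IH sub_Not] .
  show ?case using cons_not.hyps(3) ha by (auto simp: sat_P_def)
next
  case (cons_next k l a)
  have ha: "\<And>t. (a \<in> lab (aps_at Ps (\<sigma> t))) = sat_P lam Ps \<sigma> t a"
    using IH_sub[OF cons_next.IH sub_Next] .
  show ?case
  proof (intro allI impI)
    fix i assume i: "\<sigma> i = l"
    have "\<sigma> (Suc i) \<in> succ E Ps l" using run_trans[of i] i unfolding succ_def by simp
    then have "(Next a \<in> lab (aps_at Ps l)) = (a \<in> lab (aps_at Ps (\<sigma> (Suc i))))"
      using cons_next.hyps(3) by blast
    then show "(Next a \<in> lab (aps_at Ps l)) = sat_P lam Ps \<sigma> i (Next a)"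
      using ha[of "Suc i"] by (simp add: sat_P_def)
  qed
next
  case (cons_until_a k l a x y b)
  have hb: "\<And>t. (b \<in> lab (aps_at Ps (\<sigma> t))) = sat_P lam Ps \<sigma> t b"
    using IH_sub[OF cons_until_a.IH sub_Until(2)] .
  show ?case
  proof (intro allI impI)
    fix i assume i: "\<sigma> i = l"
    have "sat_P lam Ps \<sigma> i b" using hb[of i] i cons_until_a.hyps(4) by simp
    then have "sat_P lam Ps \<sigma> i (Until a x y b)"
      unfolding sat_P_Until Us_def by (intro exI[of _ i]) auto
    then show "(Until a x y b \<in> lab (aps_at Ps l)) = sat_P lam Ps \<sigma> i (Until a x y b)"
      using cons_until_a.hyps(3) by simp
  qed
next
  case (cons_until_b k l a x y b)
  have ha: "\<And>t. (a \<in> lab (aps_at Ps (\<sigma> t))) = sat_P lam Ps \<sigma> t a"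
    using IH_sub[OF cons_until_b.IH sub_Until(1)] .
  have hb: "\<And>t. (b \<in> lab (aps_at Ps (\<sigma> t))) = sat_P lam Ps \<sigma> t b"
    using IH_sub[OF cons_until_b.IH sub_Until(2)] .
  define A where "A = (\<lambda>t. a \<in> lab (aps_at Ps (\<sigma> t)))"
  define B where "B = (\<lambda>t. b \<in> lab (aps_at Ps (\<sigma> t)))"
  have satU: "sat_P lam Ps \<sigma> i (Until a x y b) = Us A B x y i" for i
    unfolding sat_P_Until A_def B_def using ha hb by simp
  define m where "m = length Ps - 1"
  have m: "m < length Ps" "last Ps = Ps ! m" unfolding m_def using ne by (auto simp: last_conv_nth)
  define Lm where "Lm = length (Ps ! m)"
  have Lm: "0 < Lm" unfolding Lm_def using nemp m(1) by (metis length_greater_0_conv nth_mem)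
  obtain jq where jq: "jq < Lm" "b \<in> lab (Ps ! m ! jq)"
    using cons_until_b.hyps(5) m(2) unfolding Lm_def by (metis in_set_conv_nth)
  have "comp_start Ps m + 0 < aps_len Ps" using loc_lt[OF m(1), of "comp_start Ps m + 0"] Lm
    unfolding Lm_def loc_def by simp
  then obtain e0 where e0: "\<sigma> e0 = comp_start Ps m + 0" using run_visit by blast
  have ce0: "cm e0 = m" "ofst e0 = 0" using cmp_at[OF m(1), of 0] Lm e0 unfolding Lm_def by auto
  have cmt: "cm t = m" if "e0 \<le> t" for t
    using run_mono[OF that] ce0 run_props(1)[of t] unfolding m_def by simp
  have oft: "ofst t = (t - e0) mod Lm" if "e0 \<le> t" for t
    using run_ofs[OF that Lm, of ] ce0 cmt Lm unfolding Lm_def by simp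
  have labt: "lab (aps_at Ps (\<sigma> t)) = lab (Ps ! m ! ((t - e0) mod Lm))" if "e0 \<le> t" for t
    using aps_at_cmp[OF run_lt[of t]] cmt[OF that] oft[OF that] by simp
  define hA where "hA = (\<lambda>j. a \<in> lab (Ps ! m ! j))"
  show ?case
  proof (intro allI impI)
    fix i assume i: "\<sigma> i = l"
    define t0 where "t0 = e0 + i * Lm"
    obtain r where "Lm = Suc r" using Lm by (cases Lm) auto
    then have "i \<le> i * Lm" by simp
    then have t0i: "i \<le> t0" unfolding t0_def by linarith
    have mods: "(t0 + d - e0) mod Lm = d mod Lm" for d
      unfolding t0_def by (simp add: add.commute)
    have per: "Gs A x y (t0 + Q * Lm) - Gs A x y t0 = int Q * (\<Sum>j<Lm. Fh hA x y j)" for Q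
    proof (rule Gs_period[OF Lm])
      fix d assume "d < Q * Lm"
      have "A (t0 + d) = hA ((t0 + d - e0) mod Lm)" unfolding A_def hA_def
        using labt[of "t0 + d"] unfolding t0_def by simp
      then show "A (t0 + d) = hA ((0 + d) mod Lm)" using mods by simp
    qed
    have "x * length (last Ps) < y * count_lab a (last Ps)" using cons_until_b.hyps(4) unfolding good_def by simp
    then have "int x * int Lm < int y * int (count_lab a (Ps ! m))" unfolding Lm_def m(2)
      by (metis of_nat_less_iff of_nat_mult)
    then have D: "1 \<le> (\<Sum>j<Lm. Fh hA x y j)"
      using count_sum[where u="Ps ! m" and a=a and x=x and y=y] unfolding hA_def Lm_def by simp
    define Q where "Q = x * (t0 - i) + x * jq"
    define p where "p = t0 + Q * Lm + jq"
    have "int Q \<le> int Q * (\<Sum>j<Lm. Fh hA x y j)" using D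
      by (metis mult.right_neutral mult_left_mono of_nat_0_le_iff)
    moreover have "Gs A x y t0 - Gs A x y i \<ge> - int x * int (t0 - i)" using Gs_lower[OF t0i] .
    moreover have "Gs A x y p - Gs A x y (t0 + Q * Lm) \<ge> - int x * int jq"
      using Gs_lower[where v="t0 + Q * Lm" and u=p and A=A and x=x and y=y] unfolding p_def by simp
    moreover have "int Q = int x * int (t0 - i) + int x * int jq" unfolding Q_def by simp
    ultimately have G: "Gs A x y i \<le> Gs A x y p" using per[of Q] by linarith
    have "B p" unfolding B_def using labt[of p] mods[of "Q * Lm + jq"] jq
      unfolding p_def t0_def by (simp add: add.assoc)
    moreover have "i \<le> p" using t0i unfolding p_def by simp
    ultimately have "Us A B x y i" unfolding Us_def using G by blast
    then show "(Until a x y b \<in> lab (aps_at Ps l)) = sat_P lam Ps \<sigma> i (Until a x y b)"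
      using cons_until_b.hyps(3) satU by simp
  qed
next
  case (cons_until_c k l a x y b c)
  have ha: "\<And>t. (a \<in> lab (aps_at Ps (\<sigma> t))) = sat_P lam Ps \<sigma> t a"
    using IH_sub[OF cons_until_c.IH sub_Until(1)] .
  have hb: "\<And>t. (b \<in> lab (aps_at Ps (\<sigma> t))) = sat_P lam Ps \<sigma> t b"
    using IH_sub[OF cons_until_c.IH sub_Until(2)] .
  define A where "A = (\<lambda>t. a \<in> lab (aps_at Ps (\<sigma> t)))"
  define B where "B = (\<lambda>t. b \<in> lab (aps_at Ps (\<sigma> t)))"
  have satU: "sat_P lam Ps \<sigma> i (Until a x y b) = Us A B x y i" for i
    unfolding sat_P_Until A_def B_def using ha hb by simp
  obtain \<theta> where th: "\<And>t c. \<theta> t c = (\<Sum>t'<t. upd (aps_at Ps (\<sigma> t')) c)"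
      "\<And>t. \<forall>g\<in>grd (aps_at Ps (\<sigma> (Suc t))). guard_holds (\<theta> (Suc t)) g"
    using run_theta by blast
  have lN: "l < aps_len Ps" using loc_lt[OF cons_until_c.hyps(1,2)] .
  show ?case
  proof (intro allI impI)
    fix i assume i: "\<sigma> i = l"
    have rt: "\<forall>t<i. \<sigma> t < l" "\<forall>t>i. \<sigma> t > l" using row_times[OF cons_until_c.hyps(3) i] by auto
    have ge: "\<sigma> t \<ge> l" if "i \<le> t" for t
    proof (cases "t = i")
      case True then show ?thesis using i by simp
    next
      case False then have "t > i" using that by simp
      then show ?thesis using rt(2) by (simp add: less_imp_le)
    qed
    have thq: "\<theta> p c = Gs A x y p - Gs A x y i" if "i \<le> p" for p
      using that
    proof (induction p rule: dec_induct)
      case base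
      have "(\<Sum>t'<i. upd (aps_at Ps (\<sigma> t')) c) = 0"
        using rt(1) cons_until_c.hyps(4) by (intro sum.neutral) auto
      then show ?case using th(1) by simp
    next
      case (step p)
      have "upd (aps_at Ps (\<sigma> p)) c = (if A p then int y - int x else - int x)"
        using cons_until_c.hyps(5,6) ge[OF step(1)] run_lt[of p] unfolding A_def by auto
      then show ?case using step th(1) by (simp add: Gs_Suc)
    qed
    have guard: "guard_holds (\<theta> p) g" if p0: "0 < p" and g0: "g \<in> grd (aps_at Ps (\<sigma> p))" for p g
    proof -
      obtain p' where "p = Suc p'" using p0 by (cases p) auto
      then show ?thesis using th(2)[of p'] g0 by auto
    qed
    show "(Until a x y b \<in> lab (aps_at Ps l)) = sat_P lam Ps \<sigma> i (Until a x y b)"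
    proof (cases "Until a x y b \<in> lab (aps_at Ps l)")
      case False
      then have nb: "b \<notin> lab (aps_at Ps l)" and negs: "\<And>l'. l < l' \<Longrightarrow> l' < aps_len Ps \<Longrightarrow>
          b \<in> lab (aps_at Ps l') \<Longrightarrow> Neg c \<in> grd (aps_at Ps l')"
        using cons_until_c.hyps(7) by auto
      have "\<not> Us A B x y i"
      proof
        assume "Us A B x y i"
        then obtain p where p: "p \<ge> i" "B p" "Gs A x y i \<le> Gs A x y p" unfolding Us_def by auto
        have "p \<noteq> i" using p(2) nb i unfolding B_def by auto
        then have pi: "p > i" using p(1) by simp
        then have "Neg c \<in> grd (aps_at Ps (\<sigma> p))" using negs[of "\<sigma> p"] rt(2) run_lt[of p] p(2)
          unfolding B_def by auto
        then have "\<theta> p c < 0" using guard[of p "Neg c"] pi by simp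
        then show False using thq[of p] p(1,3) by simp
      qed
      then show ?thesis using False satU by simp
    next
      case True
      then obtain l' where l': "l < l'" "l' < aps_len Ps" "b \<in> lab (aps_at Ps l')" "NonNeg c \<in> grd (aps_at Ps l')"
        using cons_until_c.hyps(8) by auto
      obtain p where p: "\<sigma> p = l'" using run_visit[OF l'(2)] by blast
      have pi: "p > i"
      proof (rule ccontr)
        assume "\<not> p > i"
        then have "p < i \<or> p = i" by auto
        then show False using rt(1) i p l'(1) by auto
      qed
      have "\<theta> p c \<ge> 0" using guard[of p "NonNeg c"] pi l'(4) p by simp
      then have "Gs A x y i \<le> Gs A x y p" using thq[of p] pi by simp
      moreover have "B p" using p l'(3) unfolding B_def by simp
      ultimately have "Us A B x y i" unfolding Us_def using pi by (intro exI[of _ p]) auto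
      then show ?thesis using True satU by simp
    qed
  qed
next
  case (cons_until_d k l a x y b k')
  have ha: "\<And>t. (a \<in> lab (aps_at Ps (\<sigma> t))) = sat_P lam Ps \<sigma> t a"
    using IH_sub[OF cons_until_d.IH(1) sub_Until(1)] .
  have hb: "\<And>t. (b \<in> lab (aps_at Ps (\<sigma> t))) = sat_P lam Ps \<sigma> t b"
    using IH_sub[OF cons_until_d.IH(1) sub_Until(2)] .
  define A where "A = (\<lambda>t. a \<in> lab (aps_at Ps (\<sigma> t)))"
  define B where "B = (\<lambda>t. b \<in> lab (aps_at Ps (\<sigma> t)))"
  define F where "F = Until a x y b"
  have satU: "sat_P lam Ps \<sigma> i F = Us A B x y i" for i
    unfolding F_def sat_P_Until A_def B_def using ha hb by simp
  have IHk: "(F \<in> lab (aps_at Ps (\<sigma> t))) = Us A B x y t" if "cm t = k'" for t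
  proof -
    have "\<sigma> t \<in> loc Ps k'" using cmp_props(2)[OF run_lt[of t]] that by simp
    then have "(F \<in> lab (aps_at Ps (\<sigma> t))) = sat_P lam Ps \<sigma> t F"
      using cons_until_d.IH(2) unfolding F_def by blast
    then show ?thesis using satU by simp
  qed
  have kl: "k < length Ps" "k' < length Ps" using cons_until_d.hyps(1,3) .
  show ?case unfolding F_def[symmetric]
  proof (intro allI impI)
    fix i assume i: "\<sigma> i = l"
    have lN: "l < aps_len Ps" using loc_lt[OF cons_until_d.hyps(1,2)] .
    have cmi: "cm i = k" using cmp_eq[OF cons_until_d.hyps(1,2)] i by simp
    define jl where "jl = ofst i"
    have jlk: "jl < length (Ps ! k)" using run_props(2)[of i] cmi unfolding jl_def by simp
    have goal_eq: "(F \<in> lab (aps_at Ps l)) = sat_P lam Ps \<sigma> i F \<longleftrightarrow>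
        ((F \<in> lab (aps_at Ps (\<sigma> i))) = Us A B x y i)" using i satU by simp
    show "(F \<in> lab (aps_at Ps l)) = sat_P lam Ps \<sigma> i F"
    proof (cases "Suc k = length Ps")
      case True
      then have kk: "k' < k" and per: "periodic {a, b, F} (comps Ps k' k)"
        using cons_until_d.hyps(4) unfolding F_def by auto
      have pk: "length (Ps ! k) = length (Ps ! k')"
        using periodic_props[OF per, of k] kk kl by simp
      define Ln where "Ln = length (Ps ! k')"
      have Lpos: "0 < Ln" using jlk pk unfolding Ln_def by linarith
      obtain j0 where j0: "cm j0 = k'" "ofst j0 = jl" using visit_at[OF kl(2), of jl] jlk pk by auto
      have j0i: "j0 < i"
      proof (rule ccontr)
        assume "\<not> j0 < i"
        then have "cm i \<le> cm j0" using run_mono by simp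
        then show False using cmi j0 kk by simp
      qed
      have rg: "k' \<le> cm t \<and> cm t \<le> k" if "j0 \<le> t" for t
        using run_mono[OF that] j0 run_props(1)[of t] True by simp
      have oft0: "ofst t = (ofst j0 + (t - j0)) mod Ln" if "j0 \<le> t" for t
      proof (rule run_ofs[OF that Lpos])
        show "ofst j0 < Ln" using j0 jlk pk unfolding Ln_def by simp
        fix t' assume "j0 \<le> t'" "t' < t"
        then have r: "k' \<le> cm t'" "cm t' \<le> k" using rg by auto
        then show "length (Ps ! cm t') = Ln"
          using run_pattern(1)[OF per kl(1) r] unfolding Ln_def by simp
      qed
      have oft: "ofst t = (jl + (t - j0)) mod Ln" if "j0 \<le> t" for t
        using oft0[OF that] j0(2) by simp
      have labt: "(f \<in> lab (aps_at Ps (\<sigma> t))) = (f \<in> lab (Ps ! k' ! ((jl + (t - j0)) mod Ln)))"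
        if "j0 \<le> t" "f \<in> {a, b, F}" for t f
      proof -
        have r: "k' \<le> cm t" "cm t \<le> k" using rg that by auto
        have "lab (aps_at Ps (\<sigma> t)) \<inter> {a, b, F} = lab (Ps ! k' ! ofst t) \<inter> {a, b, F}"
          using run_pattern(2)[OF per kl(1) r] by simp
        then have "lab (aps_at Ps (\<sigma> t)) \<inter> {a, b, F} = lab (Ps ! k' ! ((jl + (t - j0)) mod Ln)) \<inter> {a, b, F}"
          using oft[OF that(1)] by simp
        then show ?thesis using that(2) by (metis Int_iff)
      qed
      have m0: "(jl + (i - j0)) mod Ln = jl" using oft[of i] j0i jl_def by simp
      have shift: "(jl + (i + d - j0)) mod Ln = (jl + (j0 + d - j0)) mod Ln" for d
      proof -
        have "(jl + (i + d - j0)) mod Ln = ((jl + (i - j0)) + d) mod Ln" using j0i by (simp add: algebra_simps)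
        also have "\<dots> = ((jl + (i - j0)) mod Ln + d) mod Ln" by (simp add: mod_add_left_eq)
        also have "\<dots> = (jl + (j0 + d - j0)) mod Ln" using m0 by simp
        finally show ?thesis .
      qed
      have eqd: "(f \<in> lab (aps_at Ps (\<sigma> (j0 + d)))) = (f \<in> lab (aps_at Ps (\<sigma> (i + d))))"
        if "f \<in> {a, b, F}" for f d
        using labt[of "j0 + d" f] labt[of "i + d" f] that j0i shift[of d] by simp
      have "Us A B x y j0 = Us A B x y i"
        by (rule Us_shift_eq) (use eqd in \<open>auto simp: A_def B_def\<close>)
      moreover have "(F \<in> lab (aps_at Ps (\<sigma> j0))) = (F \<in> lab (aps_at Ps (\<sigma> i)))"
        using eqd[of F 0] by simp
      ultimately show ?thesis using IHk[OF j0(1)] i satU by simp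
    next
      case False
      then have sk: "Suc k < length Ps" using kl by simp
      consider (D2) "(good x y a (Ps ! k) \<or> neutral x y a (Ps ! k)) \<and> F \<notin> lab (aps_at Ps l) \<or>
                     bad x y a (Ps ! k) \<and> F \<in> lab (aps_at Ps l)"
        | (D3) "(good x y a (Ps ! k) \<or> neutral x y a (Ps ! k)) \<and> F \<in> lab (aps_at Ps l) \<or>
                     bad x y a (Ps ! k) \<and> F \<notin> lab (aps_at Ps l)"
        using gnb[of x y a "Ps ! k"] by blast
      then show ?thesis
      proof cases
        case D2
        then have kk: "k' < k" and per: "periodic {a, b, F} (comps Ps k' (Suc k))"
          using cons_until_d.hyps(5) sk unfolding F_def by auto
        define Ln where "Ln = length (Ps ! k')"
        have pk: "length (Ps ! k) = Ln" "length (Ps ! Suc k) = Ln"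
          using periodic_props[OF per, of k] periodic_props[OF per, of "Suc k"] kk sk unfolding Ln_def by auto
        obtain j0 where j0: "cm j0 = k'" "ofst j0 = jl" using visit_at[OF kl(2), of jl] jlk pk Ln_def by auto
        have j0i: "j0 \<le> i"
        proof (rule ccontr)
          assume "\<not> j0 \<le> i"
          then have "cm i \<le> cm j0" using run_mono by simp
          then show False using cmi j0 kk by simp
        qed
        have nb: "cm (i + Ln) \<le> Suc k" using run_next_bound[of i Ln] cmi pk by simp
        have reg: "k' \<le> cm t \<and> cm t \<le> Suc k" if "j0 \<le> t" "t < i + Ln" for t
          using run_mono[OF that(1)] run_mono[of t "i + Ln"] that nb j0 by simp
        note tr = d_transfer[OF per sk _ j0i reg Ln_def, where kk=k, unfolded A_def[symmetric] B_def[symmetric]]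
        have tr1: "(F \<in> lab (aps_at Ps (\<sigma> j0))) = (F \<in> lab (aps_at Ps (\<sigma> i)))"
          using tr(1) kk j0 jl_def by simp
        show ?thesis
        proof (cases "F \<in> lab (aps_at Ps l)")
          case True
          then have bd: "bad x y a (Ps ! k)" using D2 by auto
          have "Us A B x y j0" using IHk[OF j0(1)] tr1 True i by simp
          then have "Us A B x y i" using tr(3) kk j0 jl_def bd by simp
          then show ?thesis using True i satU by simp
        next
          case False
          then have g: "good x y a (Ps ! k) \<or> neutral x y a (Ps ! k)" using D2 by auto
          have "\<not> Us A B x y i"
          proof
            assume "Us A B x y i"
            then have "Us A B x y j0" using tr(2) kk j0 jl_def g by simp
            then show False using IHk[OF j0(1)] tr1 False i by simp
          qed
          then show ?thesis using False i satU by simp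
        qed
      next
        case D3
        then have kk: "k < k'" "Suc k' < length Ps" and per: "periodic {a, b, F} (comps Ps k (Suc k'))"
          using cons_until_d.hyps(6) sk unfolding F_def by auto
        define Ln where "Ln = length (Ps ! k)"
        have pk: "length (Ps ! k') = Ln" "length (Ps ! Suc k') = Ln"
          using periodic_props[OF per, of k'] periodic_props[OF per, of "Suc k'"] kk unfolding Ln_def by auto
        obtain j0 where j0: "cm j0 = k'" "ofst j0 = jl" using visit_at[OF kl(2), of jl] jlk pk Ln_def by auto
        have j0i: "i \<le> j0"
        proof (rule ccontr)
          assume "\<not> i \<le> j0"
          then have "cm j0 \<le> cm i" using run_mono by simp
          then show False using cmi j0 kk by simp
        qed
        have nb: "cm (j0 + Ln) \<le> Suc k'" using run_next_bound[of j0 Ln] j0 pk kk by simp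
        have reg: "k \<le> cm t \<and> cm t \<le> Suc k'" if "i \<le> t" "t < j0 + Ln" for t
          using run_mono[OF that(1)] run_mono[of t "j0 + Ln"] that nb cmi by simp
        note tr = d_transfer[OF per kk(2) _ j0i reg Ln_def, where kk=k, unfolded A_def[symmetric] B_def[symmetric]]
        have tr1: "(F \<in> lab (aps_at Ps (\<sigma> i))) = (F \<in> lab (aps_at Ps (\<sigma> j0)))"
          using tr(1) kk j0 jl_def by simp
        show ?thesis
        proof (cases "F \<in> lab (aps_at Ps l)")
          case True
          then have g: "good x y a (Ps ! k) \<or> neutral x y a (Ps ! k)" using D3 by auto
          have "Us A B x y j0" using IHk[OF j0(1)] tr1 True i by simp
          then have "Us A B x y i" using tr(2) kk j0 jl_def g by simp
          then show ?thesis using True i satU by simp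
        next
          case False
          then have bd: "bad x y a (Ps ! k)" using D3 by auto
          have "\<not> Us A B x y i"
          proof
            assume "Us A B x y i"
            then have "Us A B x y j0" using tr(3) kk j0 jl_def bd by simp
            then show False using IHk[OF j0(1)] tr1 False i by simp
          qed
          then show ?thesis using False i satU by simp
        qed
      qed
    qed
  qed
qed

end

lemma concat_rep_nth: "j < n * length v \<Longrightarrow> concat (replicate n v) ! j = v ! (j mod length v)"
proof (induction n arbitrary: j)
  case 0 then show ?case by simp
next
  case (Suc n)
  show ?case
  proof (cases "j < length v")
    case True then show ?thesis by (simp add: nth_append)
  next
    case False
    then have "j - length v < n * length v" using Suc.prems by simp
    then have "concat (replicate n v) ! (j - length v) = v ! ((j - length v) mod length v)" by (rule Suc.IH)
    moreover have "(j - length v) mod length v = j mod length v" using False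
      by (simp add: le_mod_geq)
    ultimately show ?thesis using False by (simp add: nth_append)
  qed
qed

theorem lemma8:
  fixes S :: "'s set" and sI :: 's and E :: "('s \<times> 's) set" and lam :: "'s \<Rightarrow> 'ap set"
    and AP :: "'ap set"
    and \<phi> \<psi> :: "'ap fltl" and x y :: nat
    and Ps :: "('s, 'ap, 'c::finite) apath list"
    and k :: nat and \<sigma> :: "nat \<Rightarrow> nat" and u :: "nat list" and n :: nat and w :: "nat \<Rightarrow> nat"
  assumes K: "kripke S sI E lam AP" and flat: "flat_kripke S E"
    and wf: "wf_fltl (Until \<phi> x y \<psi>)"
    and aps: "is_aps S E AP (Until \<phi> x y \<psi>) Ps"
    and cons_phi: "consistent lam E Ps \<phi>" and cons_psi: "consistent lam E Ps \<psi>"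
    and k_lt: "Suc k < length Ps" and k_loop: "is_loop E (Ps ! k)"
    and run: "\<sigma> \<in> Runs E Ps"
    and n_ge: "n \<ge> length (Ps ! k) * y + 2"
    and form: "\<sigma> = (\<lambda>i. if i < length u + n * length (Ps ! k)
                        then (u @ concat (replicate n
                               [comp_start Ps k ..< comp_start Ps k + length (Ps ! k)])) ! i
                        else w (i - (length u + n * length (Ps ! k))))"
  shows "\<exists>n1 n2. n = n1 + length (Ps ! k) * y + n2 \<and>
           (\<forall>i. (length u \<le> i \<and> i < length u + (n1 - 1) * length (Ps ! k) \<or>
                 length u + (n1 + length (Ps ! k) * y) * length (Ps ! k) \<le> i \<and>
                 i < length u + (n1 + length (Ps ! k) * y + n2 - 2) * length (Ps ! k)) \<longrightarrow>
                (sat_P lam Ps \<sigma> i (Until \<phi> x y \<psi>) \<longleftrightarrow>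
                 sat_P lam Ps \<sigma> (i + length (Ps ! k)) (Until \<phi> x y \<psi>)))"
proof -
  have ne: "Ps \<noteq> []" using aps unfolding is_aps_def by simp
  have nemp: "\<forall>P\<in>set Ps. P \<noteq> []" using aps unfolding is_aps_def is_row_def is_loop_def by blast
  interpret arun E Ps \<sigma> using nemp ne run by unfold_locales
  define L where "L = length (Ps ! k)"
  have Lpos: "0 < L" using k_loop unfolding L_def is_loop_def by simp
  define s where "s = length u"
  define A where "A = (\<lambda>t. sat_P lam Ps \<sigma> t \<phi>)"
  define B where "B = (\<lambda>t. sat_P lam Ps \<sigma> t \<psi>)"
  have corA: "A t = (\<phi> \<in> lab (aps_at Ps (\<sigma> t)))" for t
    using correct[of lam \<phi> "\<sigma> t"] cons_phi run_lt[of t] unfolding A_def consistent_def by blast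
  have corB: "B t = (\<psi> \<in> lab (aps_at Ps (\<sigma> t)))" for t
    using correct[of lam \<psi> "\<sigma> t"] cons_psi run_lt[of t] unfolding B_def consistent_def by blast
  define v where "v = [comp_start Ps k ..< comp_start Ps k + L]"
  have lv: "length v = L" unfolding v_def by simp
  have sig: "\<sigma> t = v ! ((t - s) mod L)" if "s \<le> t" "t < s + n * L" for t
  proof -
    have "\<sigma> t = (u @ concat (replicate n v)) ! t" using form that unfolding v_def s_def L_def by simp
    also have "\<dots> = concat (replicate n v) ! (t - s)" using that unfolding s_def by (simp add: nth_append)
    also have "\<dots> = v ! ((t - s) mod L)" using concat_rep_nth[of "t - s" n v] that lv by simp
    finally show ?thesis .
  qed
  have per: "A (t + L) = A t \<and> B (t + L) = B t" if "s \<le> t" "t + L < s + n * L" for t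
  proof -
    have e: "t + L - s = (t - s) + L" using that by simp
    have m: "(t + L - s) mod L = (t - s) mod L" unfolding e by simp
    have "\<sigma> (t + L) = v ! ((t + L - s) mod L)" using sig[of "t + L"] that by simp
    then have "\<sigma> (t + L) = v ! ((t - s) mod L)" unfolding m .
    then have "\<sigma> (t + L) = \<sigma> t" using sig[of t] that by simp
    then show ?thesis using corA corB by simp
  qed
  have xy: "x \<le> y" "0 < y" using wf by auto
  have ng: "L * y \<le> n" using n_ge unfolding L_def by simp
  obtain n1 n2 where nn: "n = n1 + L * y + n2"
    and P: "\<forall>i. (s \<le> i \<and> i < s + (n1 - 1) * L \<or>
                 s + (n1 + L * y) * L \<le> i \<and> i < s + (n1 + L * y + n2 - 2) * L) \<longrightarrow>
                (Us A B x y i \<longleftrightarrow> Us A B x y (i + L))"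
    using main_abs[of L s n A B x y, OF Lpos per xy ng] by blast
  have satU: "sat_P lam Ps \<sigma> i (Until \<phi> x y \<psi>) = Us A B x y i" for i
    unfolding sat_P_Until A_def B_def ..
  show ?thesis
    using nn P unfolding satU s_def L_def by blast
qed


end
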